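(* Let $n=2^m$ with $m\ge1$, let $\rho_{\text{in}}$ be an $n$-qubit density matrix, and let $f_{\text{TT}}$ be the objective function of the $n$-qubit TT-QNN. Then $$\mathbb{E}_{\boldsymbol\theta}\Big(f_{\text{TT}}-\frac12\Big)^2\ge\frac{\text{Tr}[(\sigma_1\otimes I^{\otimes(n-1)})\rho_{\text{in}}]^2+\text{Tr}[(\sigma_3\otimes I^{\otimes(n-1)})\rho_{\text{in}}]^2}{8n},$$ where the expectation is over all parameters drawn independently and uniformly from $[0,2\pi]$.
   Context: Pauli matrices $\sigma_0=I,\sigma_1=X,\sigma_2=Y,\sigma_3=Z$; qubits numbered $1,\dots,n$. A rotation with parameter $\theta$ on qubit $q$ is $e^{-i\theta\sigma_2}$ on qubit $q$. A CNOT with control $c$ and target $t$ is $|0\rangle\langle0|_c\otimes I_t+|1\rangle\langle1|_c\otimes(\sigma_1)_t$. TT-QNN: $V_{\text{TT}}=V_{m+1}CX_mV_m\cdots CX_1V_1$, where for $\ell=1,\dots,m+1$, $V_\ell$ is the tensor product of rotations with independent parameters on qubits $(j-1)2^{\ell-1}+1$, $j=1,\dots,n2^{1-\ell}$; for $\ell=1,\dots,m$, $CX_\ell$ is the product of CNOTs with control qubit $(j-\frac12)2^\ell+1$ and target $(j-1)2^\ell+1$, $j=1,\dots,n2^{-\ell}$. $f_{\text{TT}}(\boldsymbol\theta)=\frac12+\frac12\text{Tr}[(\sigma_3\otimes I^{\otimes(n-1)})V_{\text{TT}}(\boldsymbol\theta)\rho_{\text{in}}V_{\text{TT}}(\boldsymbol\theta)^\dagger]$.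 *)

theory Defs
  imports "Jordan_Normal_Form.Schur_Decomposition" "HOL-Probability.Probability"
begin

text \<open>Computational basis index i < 2^n; qubit q (1..n) is the q-th tensor factor
  from the left, i.e. the bit of weight 2^(n-q).\<close>
definition qbit :: "nat \<Rightarrow> nat \<Rightarrow> nat \<Rightarrow> nat" where
  "qbit n q i = (i div 2 ^ (n - q)) mod 2"

definition pauli :: "nat \<Rightarrow> complex mat" where
  "pauli k = (if k = 0 then mat_of_rows_list 2 [[1, 0], [0, 1]]
    else if k = 1 then mat_of_rows_list 2 [[0, 1], [1, 0]]
    else if k = 2 then mat_of_rows_list 2 [[0, -\<i>], [\<i>, 0]]
    else mat_of_rows_list 2 [[1, 0], [0, -1]])"

text \<open>The operator U (a 2x2 matrix) acting on qubit q, tensored with identities elsewhere.\<close>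
definition on_qubit :: "nat \<Rightarrow> nat \<Rightarrow> complex mat \<Rightarrow> complex mat" where
  "on_qubit n q U = Matrix.mat (2 ^ n) (2 ^ n) (\<lambda>(i, j).
     if (\<forall>p \<in> {1..n} - {q}. qbit n p i = qbit n p j) then U $$ (qbit n q i, qbit n q j) else 0)"

text \<open>Rotation e^{-i theta sigma_2} = cos theta I - i sin theta sigma_2 (as sigma_2^2 = I).\<close>
definition rot :: "real \<Rightarrow> complex mat" where
  "rot \<theta> = complex_of_real (cos \<theta>) \<cdot>\<^sub>m pauli 0 - (\<i> * complex_of_real (sin \<theta>)) \<cdot>\<^sub>m pauli 2"

definition proj0 :: "complex mat" where "proj0 = mat_of_rows_list 2 [[1, 0], [0, 0]]"
definition proj1 :: "complex mat" where "proj1 = mat_of_rows_list 2 [[0, 0], [0, 1]]"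

definition cnot :: "nat \<Rightarrow> nat \<Rightarrow> nat \<Rightarrow> complex mat" where
  "cnot n c t = on_qubit n c proj0 + on_qubit n c proj1 * on_qubit n t (pauli 1)"

definition mat_prod_list :: "nat \<Rightarrow> complex mat list \<Rightarrow> complex mat" where
  "mat_prod_list d Us = foldr (*) Us (1\<^sub>m d)"

text \<open>Parameters are indexed by pairs (l, j): layer l, rotation j.\<close>
definition V_layer :: "nat \<Rightarrow> nat \<Rightarrow> (nat \<times> nat \<Rightarrow> real) \<Rightarrow> complex mat" where
  "V_layer n l \<theta> = mat_prod_list (2 ^ n)
     (map (\<lambda>j. on_qubit n ((j - 1) * 2 ^ (l - 1) + 1) (rot (\<theta> (l, j)))) [1..<n div 2 ^ (l - 1) + 1])"

definition CX_layer :: "nat \<Rightarrow> nat \<Rightarrow> complex mat" where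
  "CX_layer n l = mat_prod_list (2 ^ n)
     (map (\<lambda>j. cnot n ((2 * j - 1) * 2 ^ (l - 1) + 1) ((j - 1) * 2 ^ l + 1)) [1..<n div 2 ^ l + 1])"

fun TT_partial :: "nat \<Rightarrow> nat \<Rightarrow> (nat \<times> nat \<Rightarrow> real) \<Rightarrow> complex mat" where
  "TT_partial n 0 \<theta> = 1\<^sub>m (2 ^ n)"
| "TT_partial n (Suc 0) \<theta> = V_layer n 1 \<theta>"
| "TT_partial n (Suc (Suc k)) \<theta> = V_layer n (k + 2) \<theta> * CX_layer n (k + 1) * TT_partial n (Suc k) \<theta>"

definition V_TT :: "nat \<Rightarrow> nat \<Rightarrow> (nat \<times> nat \<Rightarrow> real) \<Rightarrow> complex mat" where
  "V_TT n m \<theta> = TT_partial n (m + 1) \<theta>"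

definition mat_trace :: "complex mat \<Rightarrow> complex" where
  "mat_trace A = (\<Sum>i < dim_row A. A $$ (i, i))"

definition f_TT :: "nat \<Rightarrow> nat \<Rightarrow> complex mat \<Rightarrow> (nat \<times> nat \<Rightarrow> real) \<Rightarrow> real" where
  "f_TT n m \<rho> \<theta> = 1/2 + 1/2 * Re (mat_trace (on_qubit n 1 (pauli 3) * V_TT n m \<theta> * \<rho> * mat_adjoint (V_TT n m \<theta>)))"

definition TT_params :: "nat \<Rightarrow> nat \<Rightarrow> (nat \<times> nat) set" where
  "TT_params n m = {(l, j). 1 \<le> l \<and> l \<le> m + 1 \<and> 1 \<le> j \<and> j \<le> n div 2 ^ (l - 1)}"

definition TT_param_measure :: "nat \<Rightarrow> nat \<Rightarrow> (nat \<times> nat \<Rightarrow> real) measure" where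
  "TT_param_measure n m = PiM (TT_params n m) (\<lambda>_. uniform_measure lborel {0..2 * pi})"

definition density_matrix :: "nat \<Rightarrow> complex mat \<Rightarrow> bool" where
  "density_matrix n \<rho> \<longleftrightarrow> \<rho> \<in> carrier_mat (2 ^ n) (2 ^ n) \<and> mat_adjoint \<rho> = \<rho> \<and>
     (\<forall>v \<in> carrier_vec (2 ^ n). 0 \<le> Re (conjugate v \<bullet> (\<rho> *\<^sub>v v))) \<and> mat_trace \<rho> = 1"

end

theory Submission
  imports Defs
begin

definition agree :: "nat \<Rightarrow> nat \<Rightarrow> nat \<Rightarrow> nat \<Rightarrow> bool" where
  "agree n q i j \<longleftrightarrow> (\<forall>p\<in>{1..n} - {q}. qbit n p i = qbit n p j)"

definition upd :: "nat \<Rightarrow> nat \<Rightarrow> nat \<Rightarrow> nat \<Rightarrow> nat" where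
  "upd n q b i = (if b = 0 then unset_bit (n - q) i else set_bit (n - q) i)"

lemma qbit_bit: "qbit n p i = of_bool (bit i (n - p))"
  unfolding qbit_def by (simp add: bit_iff_odd odd_iff_mod_2_eq_one)

lemma bit_upd: "bit (upd n q b i) r = (if r = n - q then b \<noteq> 0 else bit i r)"
  unfolding upd_def by (auto simp: bit_set_bit_iff bit_unset_bit_iff)

lemma lt_pow_bit: "(i::nat) < 2 ^ n \<Longrightarrow> n \<le> r \<Longrightarrow> \<not> bit i r"
  by (metis bit_take_bit_iff linorder_not_le take_bit_nat_eq_self_iff)

lemma upd_lt: assumes "1 \<le> q" "q \<le> n" "i < 2 ^ n" shows "upd n q b i < 2 ^ n"
proof -
  have "take_bit n (upd n q b i) = upd n q b i"
  proof (rule bit_eqI)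
    fix r show "bit (take_bit n (upd n q b i)) r = bit (upd n q b i) r"
      using assms(1,2) lt_pow_bit[OF assms(3), of r] by (cases "r < n") (auto simp: bit_take_bit_iff bit_upd)
  qed
  then show ?thesis by (metis take_bit_nat_eq_self_iff)
qed

lemma nat_eq_bits: assumes "(i::nat) < 2 ^ n" "j < 2 ^ n" "\<forall>p\<in>{1..n}. qbit n p i = qbit n p j"
  shows "i = j"
proof (rule bit_eqI)
  fix r
  show "bit i r = bit j r"
  proof (cases "r < n")
    case True
    then have "qbit n (n - r) i = qbit n (n - r) j" using assms(3) by auto
    then show ?thesis using True by (cases "bit i r"; cases "bit j r") (auto simp: qbit_bit)
  next
    case False then show ?thesis using lt_pow_bit assms by auto
  qed
qed

lemma qbit_upd: assumes "1 \<le> p" "p \<le> n" "1 \<le> q" "q \<le> n" "b < 2"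
  shows "qbit n p (upd n q b i) = (if p = q then b else qbit n p i)"
  using assms by (auto simp: qbit_bit bit_upd)

lemma qbit_lt2: "qbit n p i < 2" unfolding qbit_def by simp

lemma agree_sym: "agree n q i j = agree n q j i" unfolding agree_def by (rule ball_cong) auto

lemma agree_upd: assumes "1 \<le> q" "q \<le> n" "b < 2"
  shows "agree n q (upd n q b i) k = agree n q i k"
  using assms unfolding agree_def by (auto simp: qbit_upd)

lemma agree_iff: assumes "1 \<le> q" "q \<le> n" "i < 2 ^ n" "j < 2 ^ n"
  shows "agree n q i j \<longleftrightarrow> j = upd n q (qbit n q j) i"
proof
  assume a: "agree n q i j"
  show "j = upd n q (qbit n q j) i"
    by (rule nat_eq_bits[OF assms(4) upd_lt[OF assms(1-3)]])
       (use a assms in \<open>auto simp: qbit_upd qbit_lt2 agree_def\<close>)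
next
  assume "j = upd n q (qbit n q j) i"
  then show "agree n q i j" using assms unfolding agree_def
    by (metis (no_types, lifting) DiffE atLeastAtMost_iff insertI1 qbit_lt2 qbit_upd)
qed

lemma agree_set: assumes "1 \<le> q" "q \<le> n" "i < 2 ^ n"
  shows "{j \<in> {..<2^n}. agree n q i j} = {upd n q 0 i, upd n q 1 i}"
proof -
  have "j = upd n q 0 i \<or> j = upd n q 1 i" if "j < 2^n" "agree n q i j" for j
  proof -
    have "qbit n q j = 0 \<or> qbit n q j = 1" using qbit_lt2[of n q j] by linarith
    then show ?thesis using agree_iff[OF assms that(1)] that by auto
  qed
  moreover have "agree n q i (upd n q b i)" "upd n q b i < 2^n" if "b < 2" for b
    using agree_iff[OF assms upd_lt[OF assms]] upd_lt[OF assms] that qbit_upd[OF assms(1,2) assms(1,2) that] by auto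
  ultimately show ?thesis by auto
qed

lemma upd_ne: assumes "1 \<le> q" "q \<le> n" shows "upd n q 0 i \<noteq> upd n q 1 i"
  using qbit_upd[OF assms assms, of 0 i] qbit_upd[OF assms assms, of 1 i] by auto

lemma sum_agree: assumes "1 \<le> q" "q \<le> n" "i < 2 ^ n"
  shows "(\<Sum>j<2^n. if agree n q i j then g j else 0) = g (upd n q 0 i) + g (upd n q 1 i)"
proof -
  have "(\<Sum>j<2^n. if agree n q i j then g j else 0) = sum g {j \<in> {..<2^n}. agree n q i j}"
    by (rule sum.inter_filter[symmetric]) simp
  also have "\<dots> = g (upd n q 0 i) + g (upd n q 1 i)"
    using agree_set[OF assms] upd_ne[OF assms(1,2)] by simp
  finally show ?thesis .
qed

lemma mat_adjoint_alt: "mat_adjoint A = Matrix.mat (dim_col A) (dim_row A) (\<lambda>(i,j). conjugate (A $$ (j,i)))"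
  unfolding mat_adjoint_def by (rule eq_matI) (auto simp: mat_of_rows_index)

lemma mat_adjoint_dim[simp]: "dim_row (mat_adjoint A) = dim_col A" "dim_col (mat_adjoint A) = dim_row A"
  by (auto simp: mat_adjoint_alt)

lemma mat_adjoint_index[simp]: "i < dim_col A \<Longrightarrow> j < dim_row A \<Longrightarrow> mat_adjoint A $$ (i,j) = conjugate (A $$ (j,i))"
  by (auto simp: mat_adjoint_alt)

lemma mat_adjoint_carrier[simp]: "A \<in> carrier_mat n m \<Longrightarrow> mat_adjoint A \<in> carrier_mat m n"
  by auto

lemma on_qubit_dim[simp]: "dim_row (on_qubit n q U) = 2^n" "dim_col (on_qubit n q U) = 2^n"
  "on_qubit n q U \<in> carrier_mat (2^n) (2^n)"
  by (auto simp: on_qubit_def)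

lemma on_qubit_index: "i < 2^n \<Longrightarrow> j < 2^n \<Longrightarrow>
  on_qubit n q U $$ (i,j) = (if agree n q i j then U $$ (qbit n q i, qbit n q j) else 0)"
  by (simp add: on_qubit_def agree_def)

lemma on_qubit_mult: assumes q: "1 \<le> q" "q \<le> n" and A: "A \<in> carrier_mat 2 2" and B: "B \<in> carrier_mat 2 2"
  shows "on_qubit n q A * on_qubit n q B = on_qubit n q (A * B)"
proof (rule eq_matI)
  fix i k assume i: "i < dim_row (on_qubit n q (A * B))" and k: "k < dim_col (on_qubit n q (A * B))"
  then have i: "i < 2^n" and k: "k < 2^n" by auto
  have "(on_qubit n q A * on_qubit n q B) $$ (i,k) =
     (\<Sum>j<2^n. if agree n q i j then A $$ (qbit n q i, qbit n q j) * on_qubit n q B $$ (j,k) else 0)"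
    using i k by (auto simp: scalar_prod_def on_qubit_index lessThan_atLeast0 intro!: sum.cong)
  also have "\<dots> = (\<Sum>b<2. A $$ (qbit n q i, b) * on_qubit n q B $$ (upd n q b i, k))"
    by (subst sum_agree[OF q i]) (simp add: qbit_upd[OF q q] numeral_2_eq_2)
  also have "\<dots> = (if agree n q i k then (\<Sum>b<2. A $$ (qbit n q i, b) * B $$ (b, qbit n q k)) else 0)"
    using q k upd_lt[OF q i] by (auto simp: on_qubit_index agree_upd qbit_upd numeral_2_eq_2)
  also have "\<dots> = on_qubit n q (A * B) $$ (i,k)"
    using i k A B qbit_lt2[of n q i] qbit_lt2[of n q k]
    by (auto simp: on_qubit_index scalar_prod_def lessThan_atLeast0)
  finally show "(on_qubit n q A * on_qubit n q B) $$ (i,k) = on_qubit n q (A * B) $$ (i,k)" .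
qed auto

definition agree2 :: "nat \<Rightarrow> nat \<Rightarrow> nat \<Rightarrow> nat \<Rightarrow> nat \<Rightarrow> bool" where
  "agree2 n p q i k \<longleftrightarrow> (\<forall>r\<in>{1..n} - {p, q}. qbit n r i = qbit n r k)"

lemma agree_upd2: assumes p: "1 \<le> p" "p \<le> n" and q: "1 \<le> q" "q \<le> n" and pq: "p \<noteq> q" and b: "b < 2"
  shows "agree n q (upd n p b i) k \<longleftrightarrow> (b = qbit n p k \<and> agree2 n p q i k)"
proof -
  have "agree n q (upd n p b i) k \<longleftrightarrow> (\<forall>r\<in>{1..n} - {q}. (if r = p then b else qbit n r i) = qbit n r k)"
    unfolding agree_def using p b by (intro ball_cong) (auto simp: qbit_upd)
  also have "\<dots> \<longleftrightarrow> (b = qbit n p k \<and> agree2 n p q i k)"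
    unfolding agree2_def using p pq by auto
  finally show ?thesis .
qed

lemma on_qubit_mult_diff: assumes p: "1 \<le> p" "p \<le> n" and q: "1 \<le> q" "q \<le> n" and pq: "p \<noteq> q"
  shows "on_qubit n p A * on_qubit n q B = Matrix.mat (2^n) (2^n) (\<lambda>(i,k).
     if agree2 n p q i k then A $$ (qbit n p i, qbit n p k) * B $$ (qbit n q i, qbit n q k) else 0)"
proof (rule eq_matI)
  fix i k assume "i < dim_row (Matrix.mat (2^n) (2^n) (\<lambda>(i,k).
     if agree2 n p q i k then A $$ (qbit n p i, qbit n p k) * B $$ (qbit n q i, qbit n q k) else 0))"
    and "k < dim_col (Matrix.mat (2^n) (2^n) (\<lambda>(i,k).
     if agree2 n p q i k then A $$ (qbit n p i, qbit n p k) * B $$ (qbit n q i, qbit n q k) else 0))"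
  then have i: "i < 2^n" and k: "k < 2^n" by auto
  have "(on_qubit n p A * on_qubit n q B) $$ (i,k) =
     (\<Sum>j<2^n. if agree n p i j then A $$ (qbit n p i, qbit n p j) * on_qubit n q B $$ (j,k) else 0)"
    using i k by (auto simp: scalar_prod_def on_qubit_index lessThan_atLeast0 intro!: sum.cong)
  also have "\<dots> = (\<Sum>b<2. A $$ (qbit n p i, b) * on_qubit n q B $$ (upd n p b i, k))"
    by (subst sum_agree[OF p i]) (simp add: qbit_upd[OF p p] numeral_2_eq_2)
  also have "\<dots> = (\<Sum>b<2. if b = qbit n p k \<and> agree2 n p q i k then A $$ (qbit n p i, b) * B $$ (qbit n q i, qbit n q k) else 0)"
    using p q pq k upd_lt[OF p i] by (auto simp: on_qubit_index agree_upd2 qbit_upd intro!: sum.cong)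
  also have "\<dots> = (if agree2 n p q i k then A $$ (qbit n p i, qbit n p k) * B $$ (qbit n q i, qbit n q k) else 0)"
    using qbit_lt2[of n p k] by (auto simp: sum.delta' )
  finally show "(on_qubit n p A * on_qubit n q B) $$ (i,k) = Matrix.mat (2^n) (2^n) (\<lambda>(i,k).
     if agree2 n p q i k then A $$ (qbit n p i, qbit n p k) * B $$ (qbit n q i, qbit n q k) else 0) $$ (i,k)"
    using i k by simp
qed auto

lemma agree2_sym: "agree2 n p q i k = agree2 n q p i k" unfolding agree2_def by (simp add: insert_commute)

lemma on_qubit_comm: assumes p: "1 \<le> p" "p \<le> n" and q: "1 \<le> q" "q \<le> n" and pq: "p \<noteq> q"
  shows "on_qubit n p A * on_qubit n q B = on_qubit n q B * on_qubit n p A"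
  unfolding on_qubit_mult_diff[OF p q pq] on_qubit_mult_diff[OF q p pq[symmetric]]
  by (rule eq_matI) (auto simp: agree2_sym)

lemma on_qubit_adjoint: "A \<in> carrier_mat 2 2 \<Longrightarrow> mat_adjoint (on_qubit n q A) = on_qubit n q (mat_adjoint A)"
  by (rule eq_matI) (auto simp: on_qubit_index agree_sym qbit_lt2)

lemma on_qubit_one: assumes q: "1 \<le> q" "q \<le> n" shows "on_qubit n q (1\<^sub>m 2) = 1\<^sub>m (2^n)"
proof (rule eq_matI)
  fix i j assume "i < dim_row (1\<^sub>m (2^n) :: complex mat)" "j < dim_col (1\<^sub>m (2^n) :: complex mat)"
  then have i: "i < 2^n" and j: "j < 2^n" by auto
  have "(agree n q i j \<and> qbit n q i = qbit n q j) \<longleftrightarrow> i = j"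
  proof
    assume "agree n q i j \<and> qbit n q i = qbit n q j"
    then show "i = j" by (intro nat_eq_bits[OF i j]) (auto simp: agree_def)
  qed (auto simp: agree_def)
  then show "on_qubit n q (1\<^sub>m 2) $$ (i, j) = 1\<^sub>m (2 ^ n) $$ (i, j)"
    using i j qbit_lt2[of n q i] qbit_lt2[of n q j] by (auto simp: on_qubit_index)
qed auto

lemma on_qubit_add: assumes "A \<in> carrier_mat 2 2" "B \<in> carrier_mat 2 2"
  shows "on_qubit n q (A + B) = on_qubit n q A + on_qubit n q B"
  using assms by (intro eq_matI) (auto simp: on_qubit_index qbit_lt2)

lemma on_qubit_smult: assumes "A \<in> carrier_mat 2 2"
  shows "on_qubit n q (c \<cdot>\<^sub>m A) = c \<cdot>\<^sub>m on_qubit n q A"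
  using assms by (intro eq_matI) (auto simp: on_qubit_index qbit_lt2)

lemma mat_trace_comm: assumes "A \<in> carrier_mat d e" "B \<in> carrier_mat e d"
  shows "mat_trace (A * B) = mat_trace (B * A)"
proof -
  have "mat_trace (A * B) = (\<Sum>i<d. \<Sum>k<e. A $$ (i,k) * B $$ (k,i))"
    using assms by (auto simp: mat_trace_def scalar_prod_def lessThan_atLeast0 intro!: sum.cong)
  also have "\<dots> = (\<Sum>k<e. \<Sum>i<d. B $$ (k,i) * A $$ (i,k))"
    by (subst sum.swap) (simp add: mult.commute)
  also have "\<dots> = mat_trace (B * A)"
    using assms by (auto simp: mat_trace_def scalar_prod_def lessThan_atLeast0 intro!: sum.cong)
  finally show ?thesis .
qed

lemma mat_trace_add: assumes "A \<in> carrier_mat d d" "B \<in> carrier_mat d d"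
  shows "mat_trace (A + B) = mat_trace A + mat_trace B"
  using assms by (auto simp: mat_trace_def sum.distrib)

lemma mat_trace_smult: "A \<in> carrier_mat d d \<Longrightarrow> mat_trace (c \<cdot>\<^sub>m A) = c * mat_trace A"
  by (auto simp: mat_trace_def sum_distrib_left)

lemma mat_adjoint_mult: fixes A B :: "complex mat" assumes "A \<in> carrier_mat a b" "B \<in> carrier_mat b c"
  shows "mat_adjoint (A * B) = mat_adjoint B * mat_adjoint A"
  using assms by (intro eq_matI) (auto simp: scalar_prod_def mult.commute cnj_sum intro!: sum.cong)

lemma mat_adjoint_adjoint[simp]: "mat_adjoint (mat_adjoint A) = A"
  by (rule eq_matI) auto

lemma mat_adjoint_one[simp]: "mat_adjoint (1\<^sub>m d :: complex mat) = 1\<^sub>m d"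
  by (rule eq_matI) auto

definition unitary :: "nat \<Rightarrow> complex mat \<Rightarrow> bool" where
  "unitary d U \<longleftrightarrow> U \<in> carrier_mat d d \<and> mat_adjoint U * U = 1\<^sub>m d"

lemma unitary_one: "unitary d (1\<^sub>m d)" by (simp add: unitary_def)

lemma unitary_mult: assumes "unitary d U" "unitary d V" shows "unitary d (U * V)"
proof -
  note sq = assoc_mult_mat[of _ d d _ d _ d] mult_carrier_mat[of _ d d _ d]
  have U: "U \<in> carrier_mat d d" and V: "V \<in> carrier_mat d d" using assms by (auto simp: unitary_def)
  have Uac: "mat_adjoint U \<in> carrier_mat d d" "mat_adjoint V \<in> carrier_mat d d" using U V by auto
  have "mat_adjoint (U * V) * (U * V) = mat_adjoint V * (mat_adjoint U * U) * V"
    using U V Uac by (simp add: mat_adjoint_mult[OF U V] sq)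
  also have "\<dots> = 1\<^sub>m d" using assms V Uac by (simp add: unitary_def)
  finally show ?thesis using U V by (simp add: unitary_def)
qed

lemma mat_prod_list_carrier: "(\<forall>U\<in>set Us. U \<in> carrier_mat d d) \<Longrightarrow> mat_prod_list d Us \<in> carrier_mat d d"
  by (induction Us) (auto simp: mat_prod_list_def)

lemma mat_prod_list_Cons: "mat_prod_list d (U # Us) = U * mat_prod_list d Us"
  by (simp add: mat_prod_list_def)

lemma unitary_prod_list: "(\<forall>U\<in>set Us. unitary d U) \<Longrightarrow> unitary d (mat_prod_list d Us)"
  by (induction Us) (auto simp: mat_prod_list_def unitary_one unitary_mult)

lemma comm_prod_list: assumes "M \<in> carrier_mat d d" "\<forall>U\<in>set Us. U \<in> carrier_mat d d \<and> U * M = M * U"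
  shows "mat_prod_list d Us * M = M * mat_prod_list d Us"
  using assms(2)
proof (induction Us)
  case Nil then show ?case using assms(1) by (simp add: mat_prod_list_def)
next
  case (Cons U Us)
  note sq = assoc_mult_mat[of _ d d _ d _ d] mult_carrier_mat[of _ d d _ d]
  have U: "U \<in> carrier_mat d d" and UM: "U * M = M * U" using Cons by auto
  have P: "mat_prod_list d Us \<in> carrier_mat d d" using Cons mat_prod_list_carrier by auto
  have "mat_prod_list d (U # Us) * M = U * (mat_prod_list d Us * M)"
    using U P assms(1) by (simp add: mat_prod_list_Cons sq)
  also have "\<dots> = U * (M * mat_prod_list d Us)" using Cons by simp
  also have "\<dots> = (U * M) * mat_prod_list d Us" using U P assms(1) by (simp add: sq)
  also have "\<dots> = M * mat_prod_list d (U # Us)" using UM U P assms(1) by (simp add: mat_prod_list_Cons sq)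
  finally show ?case .
qed

lemma trace_conj_invariant:
  assumes P: "P \<in> carrier_mat d d" and T: "T \<in> carrier_mat d d" and U: "unitary d U" and c: "U * P = P * U"
  shows "mat_trace (P * (U * T * mat_adjoint U)) = mat_trace (P * T)"
proof -
  note sq = assoc_mult_mat[of _ d d _ d _ d] mult_carrier_mat[of _ d d _ d]
  have Uc: "U \<in> carrier_mat d d" and UU: "mat_adjoint U * U = 1\<^sub>m d" using U by (auto simp: unitary_def)
  have Ua: "mat_adjoint U \<in> carrier_mat d d" using Uc by simp
  have "mat_trace (P * (U * T * mat_adjoint U)) = mat_trace ((P * U * T) * mat_adjoint U)"
    using P T Uc Ua by (simp add: sq)
  also have "\<dots> = mat_trace (mat_adjoint U * (P * U * T))"
    using mat_trace_comm[of "P * U * T" d d "mat_adjoint U"] P T Uc Ua by (simp add: sq)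
  also have "mat_adjoint U * (P * U * T) = mat_adjoint U * (U * P * T)" by (simp add: c)
  also have "\<dots> = (mat_adjoint U * U) * P * T" using P T Uc Ua by (simp add: sq)
  also have "\<dots> = P * T" using UU P T by simp
  finally show ?thesis .
qed

lemma sum2: "(\<Sum>i\<in>{0..<2::nat}. f i) = f 0 + f 1"
  by (simp add: numeral_2_eq_2)

definition m22 :: "complex \<Rightarrow> complex \<Rightarrow> complex \<Rightarrow> complex \<Rightarrow> complex mat" where
  "m22 a b c d = Matrix.mat 2 2 (\<lambda>(i,j). if i = 0 then (if j = 0 then a else b) else (if j = 0 then c else d))"

lemma m22_carrier[simp]: "m22 a b c d \<in> carrier_mat 2 2"
  by (simp add: m22_def)

lemma m22_rows: "mat_of_rows_list 2 [[a,b],[c,d]] = m22 a b c d"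
  unfolding m22_def mat_of_rows_list_def by (rule eq_matI) (auto dest!: less_2_cases)

lemma m22_mult: "m22 a b c d * m22 a' b' c' d' = m22 (a*a' + b*c') (a*b' + b*d') (c*a' + d*c') (c*b' + d*d')"
  unfolding m22_def by (rule eq_matI) (auto simp: scalar_prod_def sum2 dest!: less_2_cases)

lemma m22_add: "m22 a b c d + m22 a' b' c' d' = m22 (a+a') (b+b') (c+c') (d+d')"
  unfolding m22_def by (rule eq_matI) (auto dest!: less_2_cases)

lemma m22_smult: "x \<cdot>\<^sub>m m22 a b c d = m22 (x*a) (x*b) (x*c) (x*d)"
  unfolding m22_def by (rule eq_matI) (auto dest!: less_2_cases)

lemma m22_adj: "mat_adjoint (m22 a b c d) = m22 (cnj a) (cnj c) (cnj b) (cnj d)"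
  unfolding m22_def by (rule eq_matI) (auto dest!: less_2_cases)

lemma m22_one: "1\<^sub>m 2 = m22 1 0 0 1"
  unfolding m22_def by (rule eq_matI) (auto dest!: less_2_cases)

lemma m22_zero: "0\<^sub>m 2 2 = m22 0 0 0 0"
  unfolding m22_def by (rule eq_matI) (auto dest!: less_2_cases)

lemma m22_eq: "m22 a b c d = m22 a' b' c' d' \<longleftrightarrow> a = a' \<and> b = b' \<and> c = c' \<and> d = d'"
proof
  assume e: "m22 a b c d = m22 a' b' c' d'"
  have "m22 a b c d $$ (0,0) = m22 a' b' c' d' $$ (0,0)" "m22 a b c d $$ (0,1) = m22 a' b' c' d' $$ (0,1)"
    "m22 a b c d $$ (1,0) = m22 a' b' c' d' $$ (1,0)" "m22 a b c d $$ (1,1) = m22 a' b' c' d' $$ (1,1)"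
    using e by simp_all
  then show "a = a' \<and> b = b' \<and> c = c' \<and> d = d'" unfolding m22_def by simp
qed simp

lemma pauli_m22: "pauli 1 = m22 0 1 1 0" "pauli 3 = m22 1 0 0 (-1)"
  by (simp_all add: pauli_def m22_rows)

lemma proj_m22: "proj0 = m22 1 0 0 0" "proj1 = m22 0 0 0 1"
  by (simp_all add: proj0_def proj1_def m22_rows)

lemma pauli_carrier[simp]: "pauli k \<in> carrier_mat 2 2"
  by (simp add: pauli_def m22_rows)

lemma proj_carrier[simp]: "proj0 \<in> carrier_mat 2 2" "proj1 \<in> carrier_mat 2 2"
  by (simp_all add: proj_m22)

lemma m22_minus: "m22 a b c d - m22 a' b' c' d' = m22 (a-a') (b-b') (c-c') (d-d')"
  unfolding m22_def by (rule eq_matI) (auto dest!: less_2_cases)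

lemma pauli02_m22: "pauli 0 = m22 1 0 0 1" "pauli 2 = m22 0 (-\<i>) \<i> 0"
  by (simp_all add: pauli_def m22_rows)

lemma rot_m22: "rot t = m22 (complex_of_real (cos t)) (- complex_of_real (sin t))
   (complex_of_real (sin t)) (complex_of_real (cos t))"
proof -
  have ii: "\<i> * x * \<i> = - x" for x :: complex
    by (metis complex_i_mult_minus mult.commute mult.left_commute)
  show ?thesis unfolding rot_def pauli02_m22 m22_smult m22_minus by (simp add: ii m22_eq)
qed

lemma dbl: "complex_of_real (cos (2*t)) = complex_of_real (cos t) * complex_of_real (cos t) - complex_of_real (sin t) * complex_of_real (sin t)"
  "complex_of_real (sin (2*t)) = 2 * complex_of_real (sin t) * complex_of_real (cos t)"
  by (simp_all add: cos_double sin_double power2_eq_square)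

lemma rot_carrier[simp]: "rot t \<in> carrier_mat 2 2"
  by (simp add: rot_m22)

lemma rot_unitary2: "mat_adjoint (rot t) * rot t = 1\<^sub>m 2"
proof -
  have "cos t * cos t + sin t * sin t = 1" by (metis sin_cos_squared_add3 add.commute)
  then have e: "complex_of_real (cos t) * complex_of_real (cos t) + complex_of_real (sin t) * complex_of_real (sin t) = 1"
    by (metis of_real_1 of_real_add of_real_mult)
  show ?thesis unfolding rot_m22 m22_adj m22_mult m22_one m22_eq
    by (simp add: e algebra_simps)
qed

lemma rot_X: "mat_adjoint (rot t) * pauli 1 * rot t =
   complex_of_real (cos (2*t)) \<cdot>\<^sub>m pauli 1 + complex_of_real (sin (2*t)) \<cdot>\<^sub>m pauli 3"
  unfolding rot_m22 pauli_m22 m22_adj m22_mult m22_smult m22_add m22_eq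
  unfolding dbl of_real_minus by (simp add: algebra_simps)

lemma rot_Z: "mat_adjoint (rot t) * pauli 3 * rot t =
   complex_of_real (cos (2*t)) \<cdot>\<^sub>m pauli 3 + complex_of_real (- sin (2*t)) \<cdot>\<^sub>m pauli 1"
  unfolding rot_m22 pauli_m22 m22_adj m22_mult m22_smult m22_add m22_eq
  unfolding dbl of_real_minus by (simp add: algebra_simps)

lemma pauli1_sq: "pauli 1 * pauli 1 = 1\<^sub>m 2"
  unfolding pauli_m22 m22_mult m22_one m22_eq by simp

lemma pauli1_adj: "mat_adjoint (pauli 1) = pauli 1"
  unfolding pauli_m22 m22_adj m22_eq by simp

lemma proj_adj: "mat_adjoint proj0 = proj0" "mat_adjoint proj1 = proj1"
  unfolding proj_m22 m22_adj m22_eq by simp_all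

lemma proj_mult: "proj0 * proj0 = proj0" "proj1 * proj1 = proj1" "proj0 * proj1 = 0\<^sub>m 2 2" "proj1 * proj0 = 0\<^sub>m 2 2"
  unfolding proj_m22 m22_mult m22_zero m22_eq by simp_all

lemma proj_sum: "proj0 + proj1 = 1\<^sub>m 2"
  unfolding proj_m22 m22_add m22_one m22_eq by simp

lemma unitary_on_qubit_rot: assumes q: "1 \<le> q" "q \<le> n" shows "unitary (2^n) (on_qubit n q (rot t))"
  unfolding unitary_def
  by (simp add: on_qubit_adjoint on_qubit_mult[OF q] rot_unitary2 on_qubit_one[OF q])

lemma on_qubit_zero: "on_qubit n q (0\<^sub>m 2 2) = 0\<^sub>m (2^n) (2^n)"
  by (rule eq_matI) (auto simp: on_qubit_index qbit_lt2)

lemma mat_adjoint_add: fixes A B :: "complex mat" assumes "A \<in> carrier_mat a b" "B \<in> carrier_mat a b"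
  shows "mat_adjoint (A + B) = mat_adjoint A + mat_adjoint B"
  using assms by (intro eq_matI) auto

lemma cnot_carrier[simp]: "cnot n c t \<in> carrier_mat (2^n) (2^n)"
  by (simp add: cnot_def mult_carrier_mat[of _ "2^n" "2^n" _ "2^n"])

lemma cnot_unitary: assumes c: "1 \<le> c" "c \<le> n" and t: "1 \<le> t" "t \<le> n" and ct: "c \<noteq> t"
  shows "unitary (2^n) (cnot n c t)"
proof -
  define d where "d = (2::nat)^n"
  note sq = assoc_mult_mat[of _ d d _ d _ d] mult_carrier_mat[of _ d d _ d]
  define P0 where "P0 = on_qubit n c proj0"
  define P1 where "P1 = on_qubit n c proj1"
  define X where "X = on_qubit n t (pauli 1)"
  have cr: "P0 \<in> carrier_mat d d" "P1 \<in> carrier_mat d d" "X \<in> carrier_mat d d"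
    by (simp_all add: P0_def P1_def X_def d_def)
  have adj: "mat_adjoint P0 = P0" "mat_adjoint P1 = P1" "mat_adjoint X = X"
    unfolding P0_def P1_def X_def on_qubit_adjoint[OF pauli_carrier] on_qubit_adjoint[OF proj_carrier(1)]
      on_qubit_adjoint[OF proj_carrier(2)] proj_adj pauli1_adj by simp_all
  have cm: "P1 * X = X * P1" unfolding P1_def X_def by (rule on_qubit_comm[OF c t ct])
  have a: "P0 * P0 = P0" unfolding P0_def by (simp add: on_qubit_mult[OF c] proj_mult)
  have b: "P0 * (P1 * X) = 0\<^sub>m d d"
  proof -
    have "P0 * (P1 * X) = (P0 * P1) * X" using cr by (simp add: sq)
    also have "P0 * P1 = 0\<^sub>m d d" unfolding P0_def P1_def d_def by (simp add: on_qubit_mult[OF c] proj_mult on_qubit_zero)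
    finally show ?thesis using cr by (simp add: left_mult_zero_mat)
  qed
  have c0: "X * (P1 * P0) = 0\<^sub>m d d"
  proof -
    have "P1 * P0 = 0\<^sub>m d d" unfolding P0_def P1_def d_def by (simp add: on_qubit_mult[OF c] proj_mult on_qubit_zero)
    then show ?thesis using cr by (simp add: right_mult_zero_mat)
  qed
  have e: "X * (P1 * (P1 * X)) = P1"
  proof -
    have "X * (P1 * (P1 * X)) = X * ((P1 * P1) * X)" using cr by (simp add: sq)
    also have "P1 * P1 = P1" unfolding P1_def by (simp add: on_qubit_mult[OF c] proj_mult)
    also have "X * (P1 * X) = X * (X * P1)" by (simp add: cm)
    also have "\<dots> = (X * X) * P1" using cr by (simp add: sq)
    also have "X * X = 1\<^sub>m d" unfolding X_def d_def on_qubit_mult[OF t pauli_carrier pauli_carrier] pauli1_sq on_qubit_one[OF t] ..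
    finally show ?thesis using cr by simp
  qed
  have s: "P0 + P1 = 1\<^sub>m d" unfolding P0_def P1_def d_def
    by (simp add: on_qubit_add[symmetric] proj_sum on_qubit_one[OF c])
  have "mat_adjoint (cnot n c t) = P0 + X * P1"
    unfolding cnot_def P0_def[symmetric] P1_def[symmetric] X_def[symmetric]
    using cr by (simp add: mat_adjoint_add[of _ d d] mat_adjoint_mult[of _ d d _ d] adj)
  then have "mat_adjoint (cnot n c t) * cnot n c t = (P0 + X * P1) * (P0 + P1 * X)"
    unfolding cnot_def P0_def[symmetric] P1_def[symmetric] X_def[symmetric] by simp
  also have "\<dots> = P0 * P0 + (X * (P1 * P0) + (P0 * (P1 * X) + X * (P1 * (P1 * X))))"
    using cr by (simp add: add_mult_distrib_mat[of _ d d _ _ d] mult_add_distrib_mat[of _ d d _ d] sq assoc_add_mat[of _ d d])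
  also have "\<dots> = P0 + P1" using cr by (simp add: a b c0 e)
  finally show ?thesis using s by (simp add: unitary_def d_def)
qed

lemma cnot_comm_X1: assumes c: "2 \<le> c" "c \<le> n" and t: "1 \<le> t" "t \<le> n"
  shows "cnot n c t * on_qubit n 1 (pauli 1) = on_qubit n 1 (pauli 1) * cnot n c t"
proof -
  define d where "d = (2::nat)^n"
  note sq = assoc_mult_mat[of _ d d _ d _ d] mult_carrier_mat[of _ d d _ d]
  have c': "1 \<le> c" using c by simp
  have o: "1 \<le> (1::nat)" "1 \<le> n" using t by auto
  define P0 where "P0 = on_qubit n c proj0"
  define P1 where "P1 = on_qubit n c proj1"
  define X where "X = on_qubit n t (pauli 1)"
  define X1 where "X1 = on_qubit n 1 (pauli 1)"
  have cr: "P0 \<in> carrier_mat d d" "P1 \<in> carrier_mat d d" "X \<in> carrier_mat d d" "X1 \<in> carrier_mat d d"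
    by (simp_all add: P0_def P1_def X_def X1_def d_def)
  have c1: "P0 * X1 = X1 * P0" "P1 * X1 = X1 * P1" unfolding P0_def P1_def X1_def
    using c by (auto intro!: on_qubit_comm)
  have c2: "X * X1 = X1 * X"
  proof (cases "t = 1")
    case True then show ?thesis by (simp add: X_def X1_def)
  next
    case False then show ?thesis unfolding X_def X1_def using t by (auto intro!: on_qubit_comm)
  qed
  have "cnot n c t * X1 = P0 * X1 + P1 * (X * X1)"
    unfolding cnot_def P0_def[symmetric] P1_def[symmetric] X_def[symmetric]
    using cr by (simp add: add_mult_distrib_mat[of _ d d _ _ d] sq)
  also have "\<dots> = X1 * P0 + X1 * (P1 * X)"
  proof -
    have "P1 * (X * X1) = (P1 * X1) * X" using cr by (simp add: sq c2)
    also have "\<dots> = X1 * (P1 * X)" using cr by (simp add: sq c1)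
    finally show ?thesis by (simp add: c1)
  qed
  also have "\<dots> = X1 * cnot n c t"
    unfolding cnot_def P0_def[symmetric] P1_def[symmetric] X_def[symmetric]
    using cr by (simp add: mult_add_distrib_mat[of _ d d] sq)
  finally show ?thesis by (simp add: X1_def)
qed

declare One_nat_def[simp del]

lemma sq_mult_carrier[simp]: "A \<in> carrier_mat d d \<Longrightarrow> B \<in> carrier_mat d d \<Longrightarrow> A * B \<in> carrier_mat d d"
  by (rule mult_carrier_mat)

lemma V_bounds: fixes l m n j :: nat assumes "1 \<le> l" "l \<le> m + 1" "n = 2^m" "2 \<le> j" "j \<le> n div 2^(l-1)"
  shows "2 \<le> (j-1)*2^(l-1)+1" "(j-1)*2^(l-1)+1 \<le> n"
proof -
  define h where "h = (2::nat)^(l-1)"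
  have h: "1 \<le> h" by (simp add: h_def)
  have "j * h \<le> n" using assms(5) h unfolding h_def by (simp add: less_eq_div_iff_mult_less_eq)
  moreover obtain i where i: "j = Suc i" "1 \<le> i" using assms(4) by (cases j) auto
  moreover have "(j-1)*h = i * h" "j * h = i * h + h" using i by simp_all
  moreover have "1 \<le> i * h" using h i by (metis mult_le_mono mult_1)
  ultimately show "2 \<le> (j-1)*2^(l-1)+1" "(j-1)*2^(l-1)+1 \<le> n" unfolding h_def[symmetric] using h by linarith+
qed

lemma CX_bounds: fixes l m n j :: nat assumes "1 \<le> l" "l \<le> m" "n = 2^m" "1 \<le> j" "j \<le> n div 2^l"
  shows "2 \<le> (2*j-1)*2^(l-1)+1" "(2*j-1)*2^(l-1)+1 \<le> n" "1 \<le> (j-1)*2^l+1" "(j-1)*2^l+1 \<le> n"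
    "(2*j-1)*2^(l-1)+1 \<noteq> (j-1)*2^l+1"
proof -
  define h where "h = (2::nat)^(l-1)"
  have h: "1 \<le> h" by (simp add: h_def)
  have l2: "(2::nat)^l = 2 * h" unfolding h_def using assms(1)
    by (metis Suc_diff_le diff_Suc_1 power_Suc)
  have "j * (2 * h) \<le> n" using assms(5) h l2 by (simp add: less_eq_div_iff_mult_less_eq)
  then have jh: "2 * j * h \<le> n" by (simp add: mult.assoc)
  obtain i where i: "j = Suc i" using assms(4) by (cases j) auto
  have e1: "(2*j-1)*h = 2*i*h + h" using i by (simp add: algebra_simps)
  have e2: "(j-1)*(2*h) = 2*i*h" using i by simp
  have e3: "2 * j * h = 2*i*h + 2*h" using i by (simp add: algebra_simps)
  show "2 \<le> (2*j-1)*2^(l-1)+1" "(2*j-1)*2^(l-1)+1 \<le> n" "1 \<le> (j-1)*2^l+1" "(j-1)*2^l+1 \<le> n"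
    "(2*j-1)*2^(l-1)+1 \<noteq> (j-1)*2^l+1"
    unfolding h_def[symmetric] l2 e1 e2 using jh e3 h by linarith+
qed

definition Wl :: "nat \<Rightarrow> nat \<Rightarrow> (nat \<times> nat \<Rightarrow> real) \<Rightarrow> complex mat" where
  "Wl n l \<theta> = mat_prod_list (2 ^ n)
     (map (\<lambda>j. on_qubit n ((j - 1) * 2 ^ (l - 1) + 1) (rot (\<theta> (l, j)))) [2..<n div 2 ^ (l - 1) + 1])"

lemma V_split: fixes l m n :: nat assumes "1 \<le> l" "l \<le> m + 1" "n = 2^m"
  shows "V_layer n l \<theta> = on_qubit n 1 (rot (\<theta> (l,1))) * Wl n l \<theta>"
proof -
  have "(2::nat)^(l-1) \<le> 2^m" using assms by (intro power_increasing) auto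
  then have "0 < n div 2^(l-1)" using assms(3) by (simp add: div_greater_zero_iff)
  then have "1 \<le> n div 2^(l-1)" by linarith
  then have e: "[1..<n div 2^(l-1) + 1] = 1 # [2..<n div 2^(l-1) + 1]" by (simp add: upt_conv_Cons)
  show ?thesis unfolding V_layer_def Wl_def e list.map mat_prod_list_Cons by simp
qed

lemma Wl_carrier[simp]: "Wl n l \<theta> \<in> carrier_mat (2^n) (2^n)"
  unfolding Wl_def by (rule mat_prod_list_carrier) auto

lemma V_carrier[simp]: "V_layer n l \<theta> \<in> carrier_mat (2^n) (2^n)"
  unfolding V_layer_def by (rule mat_prod_list_carrier) auto

lemma CX_carrier[simp]: "CX_layer n l \<in> carrier_mat (2^n) (2^n)"
  unfolding CX_layer_def by (rule mat_prod_list_carrier) auto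

lemma TT_carrier[simp]: "TT_partial n k \<theta> \<in> carrier_mat (2^n) (2^n)"
  by (induction n k \<theta> rule: TT_partial.induct) auto

lemma Wl_unitary: fixes l m n :: nat assumes "1 \<le> l" "l \<le> m + 1" "n = 2^m"
  shows "unitary (2^n) (Wl n l \<theta>)"
  unfolding Wl_def using V_bounds[OF assms]
  by (intro unitary_prod_list) (auto intro!: unitary_on_qubit_rot)

lemma Wl_comm: fixes l m n :: nat assumes "1 \<le> l" "l \<le> m + 1" "n = 2^m" and B: "B \<in> carrier_mat 2 2"
  shows "Wl n l \<theta> * on_qubit n 1 B = on_qubit n 1 B * Wl n l \<theta>"
proof -
  have n1: "1 \<le> n" using assms(3) by simp
  show ?thesis unfolding Wl_def using V_bounds[OF assms(1-3)] n1
    by (intro comm_prod_list) (auto intro!: on_qubit_comm)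
qed

lemma CX_unitary: fixes l m n :: nat assumes "1 \<le> l" "l \<le> m" "n = 2^m"
  shows "unitary (2^n) (CX_layer n l)"
  unfolding CX_layer_def using CX_bounds[OF assms]
  by (intro unitary_prod_list) (auto intro!: cnot_unitary)

lemma CX_comm: fixes l m n :: nat assumes "1 \<le> l" "l \<le> m" "n = 2^m"
  shows "CX_layer n l * on_qubit n 1 (pauli 1) = on_qubit n 1 (pauli 1) * CX_layer n l"
  unfolding CX_layer_def using CX_bounds[OF assms]
  by (intro comm_prod_list) (auto intro!: cnot_comm_X1)

lemma tr_conj: assumes A: "A \<in> carrier_mat d d" and Y: "Y \<in> carrier_mat d d" and U: "U \<in> carrier_mat d d"
  shows "mat_trace (A * (U * Y * mat_adjoint U)) = mat_trace ((mat_adjoint U * A * U) * Y)"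
proof -
  note sq = assoc_mult_mat[of _ d d _ d _ d] mult_carrier_mat[of _ d d _ d]
  have Ua: "mat_adjoint U \<in> carrier_mat d d" using U by simp
  have "mat_trace (A * (U * Y * mat_adjoint U)) = mat_trace ((A * U * Y) * mat_adjoint U)"
    using A Y U Ua by (simp add: sq)
  also have "\<dots> = mat_trace (mat_adjoint U * (A * U * Y))"
    using mat_trace_comm[of "A * U * Y" d d "mat_adjoint U"] A Y U Ua by (simp add: sq)
  also have "\<dots> = mat_trace ((mat_adjoint U * A * U) * Y)" using A Y U Ua by (simp add: sq)
  finally show ?thesis .
qed

lemma tr_layer: fixes l m n :: nat assumes l: "1 \<le> l" "l \<le> m + 1" and n: "n = 2^m"
  and T: "T \<in> carrier_mat (2^n) (2^n)" and P: "P0 \<in> carrier_mat 2 2"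
  shows "mat_trace (on_qubit n 1 P0 * (V_layer n l \<theta> * T * mat_adjoint (V_layer n l \<theta>))) =
    mat_trace (on_qubit n 1 (mat_adjoint (rot (\<theta> (l,1))) * P0 * rot (\<theta> (l,1))) * T)"
proof -
  define d where "d = (2::nat)^n"
  note sq = assoc_mult_mat[of _ d d _ d _ d] mult_carrier_mat[of _ d d _ d]
  have n1: "1 \<le> (1::nat)" "1 \<le> n" using n by auto
  define R where "R = on_qubit n 1 (rot (\<theta> (l,1)))"
  define W where "W = Wl n l \<theta>"
  have cr: "R \<in> carrier_mat d d" "W \<in> carrier_mat d d" "T \<in> carrier_mat d d" "on_qubit n 1 P0 \<in> carrier_mat d d"
    "mat_adjoint R \<in> carrier_mat d d" "mat_adjoint W \<in> carrier_mat d d"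
    using T by (simp_all add: R_def W_def d_def)
  have "V_layer n l \<theta> * T * mat_adjoint (V_layer n l \<theta>) = R * (W * T * mat_adjoint W) * mat_adjoint R"
    unfolding V_split[OF l n] R_def[symmetric] W_def[symmetric] using cr
    by (simp add: mat_adjoint_mult[of _ d d _ d] sq)
  then have "mat_trace (on_qubit n 1 P0 * (V_layer n l \<theta> * T * mat_adjoint (V_layer n l \<theta>))) =
     mat_trace ((mat_adjoint R * on_qubit n 1 P0 * R) * (W * T * mat_adjoint W))"
    using tr_conj[of "on_qubit n 1 P0" d "W * T * mat_adjoint W" R] cr by (simp add: sq)
  also have "mat_adjoint R * on_qubit n 1 P0 * R = on_qubit n 1 (mat_adjoint (rot (\<theta> (l,1))) * P0 * rot (\<theta> (l,1)))"
    unfolding R_def using P by (simp add: on_qubit_adjoint on_qubit_mult[OF n1])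
  also have "mat_trace (on_qubit n 1 (mat_adjoint (rot (\<theta> (l,1))) * P0 * rot (\<theta> (l,1))) * (W * T * mat_adjoint W)) =
     mat_trace (on_qubit n 1 (mat_adjoint (rot (\<theta> (l,1))) * P0 * rot (\<theta> (l,1))) * T)"
  proof -
    have Qc: "mat_adjoint (rot (\<theta> (l,1))) * P0 * rot (\<theta> (l,1)) \<in> carrier_mat 2 2" using P by simp
    show ?thesis unfolding W_def
      by (rule trace_conj_invariant[OF _ T Wl_unitary[OF l n] Wl_comm[OF l n Qc]]) simp
  qed
  finally show ?thesis .
qed

definition sig :: "nat \<Rightarrow> complex mat \<Rightarrow> nat \<Rightarrow> (nat \<times> nat \<Rightarrow> real) \<Rightarrow> complex mat" where
  "sig n \<rho> k \<theta> = TT_partial n k \<theta> * \<rho> * mat_adjoint (TT_partial n k \<theta>)"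

definition tau :: "nat \<Rightarrow> complex mat \<Rightarrow> nat \<Rightarrow> (nat \<times> nat \<Rightarrow> real) \<Rightarrow> complex mat" where
  "tau n \<rho> k \<theta> = (if k = 0 then \<rho> else CX_layer n k * sig n \<rho> k \<theta> * mat_adjoint (CX_layer n k))"

definition ev :: "complex mat \<Rightarrow> complex mat \<Rightarrow> real" where
  "ev Ob A = Re (mat_trace (Ob * A))"

lemma sig_carrier[simp]: "\<rho> \<in> carrier_mat (2^n) (2^n) \<Longrightarrow> sig n \<rho> k \<theta> \<in> carrier_mat (2^n) (2^n)"
  unfolding sig_def by simp

lemma tau_carrier[simp]: "\<rho> \<in> carrier_mat (2^n) (2^n) \<Longrightarrow> tau n \<rho> k \<theta> \<in> carrier_mat (2^n) (2^n)"
  unfolding tau_def by simp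

lemma sig_Suc: assumes r: "\<rho> \<in> carrier_mat (2^n) (2^n)"
  shows "sig n \<rho> (Suc k) \<theta> = V_layer n (Suc k) \<theta> * tau n \<rho> k \<theta> * mat_adjoint (V_layer n (Suc k) \<theta>)"
proof (cases k)
  case 0 then show ?thesis by (simp add: sig_def tau_def One_nat_def)
next
  case (Suc k')
  define d where "d = (2::nat)^n"
  note sq = assoc_mult_mat[of _ d d _ d _ d]
  define V where "V = V_layer n (Suc k) \<theta>"
  define C where "C = CX_layer n k"
  define T where "T = TT_partial n k \<theta>"
  have cr: "V \<in> carrier_mat d d" "C \<in> carrier_mat d d" "T \<in> carrier_mat d d" "\<rho> \<in> carrier_mat d d"
    "mat_adjoint V \<in> carrier_mat d d" "mat_adjoint C \<in> carrier_mat d d" "mat_adjoint T \<in> carrier_mat d d"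
    using r by (simp_all add: V_def C_def T_def d_def)
  have "TT_partial n (Suc k) \<theta> = V * C * T" unfolding V_def C_def T_def using Suc by (simp add: One_nat_def)
  then have "sig n \<rho> (Suc k) \<theta> = V * C * T * \<rho> * mat_adjoint (V * C * T)" by (simp add: sig_def)
  also have "\<dots> = V * (C * (T * \<rho> * mat_adjoint T) * mat_adjoint C) * mat_adjoint V"
    using cr by (simp add: mat_adjoint_mult[of _ d d _ d] sq)
  also have "\<dots> = V * tau n \<rho> k \<theta> * mat_adjoint V"
    using Suc by (simp add: tau_def sig_def C_def T_def)
  finally show ?thesis by (simp add: V_def)
qed

lemma onq_comb: assumes "A \<in> carrier_mat 2 2" "B \<in> carrier_mat 2 2" and T: "T \<in> carrier_mat (2^n) (2^n)"
  shows "ev (on_qubit n q (complex_of_real a \<cdot>\<^sub>m A + complex_of_real b \<cdot>\<^sub>m B)) T =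
    a * ev (on_qubit n q A) T + b * ev (on_qubit n q B) T"
proof -
  define d where "d = (2::nat)^n"
  have cr: "on_qubit n q A \<in> carrier_mat d d" "on_qubit n q B \<in> carrier_mat d d" "T \<in> carrier_mat d d"
    using T by (simp_all add: d_def)
  have "on_qubit n q (complex_of_real a \<cdot>\<^sub>m A + complex_of_real b \<cdot>\<^sub>m B) =
     complex_of_real a \<cdot>\<^sub>m on_qubit n q A + complex_of_real b \<cdot>\<^sub>m on_qubit n q B"
    using assms by (simp add: on_qubit_add on_qubit_smult)
  then have "mat_trace (on_qubit n q (complex_of_real a \<cdot>\<^sub>m A + complex_of_real b \<cdot>\<^sub>m B) * T) =
      complex_of_real a * mat_trace (on_qubit n q A * T) + complex_of_real b * mat_trace (on_qubit n q B * T)"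
    using cr by (simp add: add_mult_distrib_mat[of _ d d _ _ d] mult_smult_assoc_mat[of _ d d _ d]
       mat_trace_add[of _ d] mat_trace_smult[of _ d])
  then show ?thesis unfolding ev_def by simp
qed

lemma X_step: fixes k m n :: nat assumes k: "k \<le> m" and n: "n = 2^m" and r: "\<rho> \<in> carrier_mat (2^n) (2^n)"
  shows "ev (on_qubit n 1 (pauli 1)) (sig n \<rho> (Suc k) \<theta>) =
    cos (2 * \<theta> (Suc k, 1)) * ev (on_qubit n 1 (pauli 1)) (tau n \<rho> k \<theta>) +
    sin (2 * \<theta> (Suc k, 1)) * ev (on_qubit n 1 (pauli 3)) (tau n \<rho> k \<theta>)"
proof -
  have l: "1 \<le> Suc k" "Suc k \<le> m + 1" using k by auto
  have "ev (on_qubit n 1 (pauli 1)) (sig n \<rho> (Suc k) \<theta>) =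
     ev (on_qubit n 1 (mat_adjoint (rot (\<theta> (Suc k,1))) * pauli 1 * rot (\<theta> (Suc k,1)))) (tau n \<rho> k \<theta>)"
    unfolding ev_def sig_Suc[OF r] using tr_layer[OF l n tau_carrier[OF r], of "pauli 1" \<theta>] by simp
  then show ?thesis unfolding rot_X by (simp only: onq_comb[OF pauli_carrier pauli_carrier tau_carrier[OF r]])
qed

lemma Z_step: fixes k m n :: nat assumes k: "k \<le> m" and n: "n = 2^m" and r: "\<rho> \<in> carrier_mat (2^n) (2^n)"
  shows "ev (on_qubit n 1 (pauli 3)) (sig n \<rho> (Suc k) \<theta>) =
    cos (2 * \<theta> (Suc k, 1)) * ev (on_qubit n 1 (pauli 3)) (tau n \<rho> k \<theta>) +
    (- sin (2 * \<theta> (Suc k, 1))) * ev (on_qubit n 1 (pauli 1)) (tau n \<rho> k \<theta>)"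
proof -
  have l: "1 \<le> Suc k" "Suc k \<le> m + 1" using k by auto
  have "ev (on_qubit n 1 (pauli 3)) (sig n \<rho> (Suc k) \<theta>) =
     ev (on_qubit n 1 (mat_adjoint (rot (\<theta> (Suc k,1))) * pauli 3 * rot (\<theta> (Suc k,1)))) (tau n \<rho> k \<theta>)"
    unfolding ev_def sig_Suc[OF r] using tr_layer[OF l n tau_carrier[OF r], of "pauli 3" \<theta>] by simp
  then show ?thesis unfolding rot_Z by (simp only: onq_comb[OF pauli_carrier pauli_carrier tau_carrier[OF r]])
qed

lemma X_CX: fixes k m n :: nat assumes k: "1 \<le> k" "k \<le> m" and n: "n = 2^m" and r: "\<rho> \<in> carrier_mat (2^n) (2^n)"
  shows "ev (on_qubit n 1 (pauli 1)) (tau n \<rho> k \<theta>) = ev (on_qubit n 1 (pauli 1)) (sig n \<rho> k \<theta>)"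
  unfolding ev_def tau_def using k
  by (simp add: trace_conj_invariant[OF _ sig_carrier[OF r] CX_unitary[OF k n] CX_comm[OF k n]])

lemma f_TT_ev: assumes r: "\<rho> \<in> carrier_mat (2^n) (2^n)"
  shows "f_TT n m \<rho> \<theta> - 1/2 = 1/2 * ev (on_qubit n 1 (pauli 3)) (sig n \<rho> (Suc m) \<theta>)"
proof -
  define d where "d = (2::nat)^n"
  note sq = assoc_mult_mat[of _ d d _ d _ d]
  have cr: "TT_partial n (Suc m) \<theta> \<in> carrier_mat d d" "on_qubit n 1 (pauli 3) \<in> carrier_mat d d"
    "\<rho> \<in> carrier_mat d d" "mat_adjoint (TT_partial n (Suc m) \<theta>) \<in> carrier_mat d d"
    using r by (simp_all add: d_def)
  have e: "TT_partial n (m+1) \<theta> = TT_partial n (Suc m) \<theta>" by (simp add: One_nat_def)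
  show ?thesis unfolding f_TT_def ev_def sig_def V_TT_def e using cr by (simp add: sq)
qed

abbreviation U2 :: "real measure" where "U2 \<equiv> uniform_measure lborel {0..2*pi}"

lemma U2_density: "U2 = density lborel (\<lambda>x. ennreal (indicator {0..2*pi} x / (2*pi)))"
proof -
  have e: "emeasure lborel {0..2*pi} = ennreal (2*pi)" by simp
  have d: "1 / ennreal (2*pi) = ennreal (1/(2*pi))" using divide_ennreal[of 1 "2*pi"] by simp
  show ?thesis unfolding uniform_measure_def e
    by (intro density_cong) (auto simp: d indicator_def)
qed

lemma U2_prob: "prob_space U2"
  by (rule prob_space_uniform_measure) auto

lemma U2_integral: fixes f :: "real \<Rightarrow> real" assumes f: "continuous_on UNIV f"
  shows "integral\<^sup>L U2 f = (LBINT x : {0..2*pi}. f x) / (2*pi)"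
proof -
  have fm: "f \<in> borel_measurable borel" by (rule borel_measurable_continuous_onI[OF f])
  have "integral\<^sup>L U2 f = (\<integral>x. (indicator {0..2*pi} x / (2*pi)) *\<^sub>R f x \<partial>lborel)"
    unfolding U2_density by (rule integral_density) (auto simp: fm)
  also have "\<dots> = (\<integral>x. indicator {0..2*pi} x *\<^sub>R f x \<partial>lborel) / (2*pi)"
    by (simp add: indicator_def)
  also have "\<dots> = (LBINT x : {0..2*pi}. f x) / (2*pi)"
    by (simp add: set_lebesgue_integral_def)
  finally show ?thesis .
qed

lemma FTC02: fixes f F :: "real \<Rightarrow> real"
  assumes "continuous_on UNIV f" "\<And>x. (F has_real_derivative f x) (at x)"
  shows "(LBINT x : {0..2*pi}. f x) = F (2*pi) - F 0"
proof -
  have "(LBINT x=ereal 0..ereal (2*pi). f x) = F (2*pi) - F 0"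
    using assms by (intro interval_integral_FTC_finite[of 0 "2*pi" f F])
      (auto intro: continuous_on_subset has_field_derivative_at_within simp: has_real_derivative_iff_has_vector_derivative[symmetric])
  then show ?thesis using interval_integral_Icc[of 0 "2*pi" f] by simp
qed

lemma c4: fixes x :: real shows "cos (x*4) = 2*(cos (x*2))^2 - 1" "cos (x*4) = 1 - 2*(sin (x*2))^2"
  using cos_double_cos[of "2*x"] cos_double_sin[of "2*x"] by (simp_all add: mult.commute)

lemma int_cos2: "(\<integral>y. (cos (2*y))^2 \<partial>U2) = 1/2"
proof -
  have "(LBINT x : {0..2*pi}. (cos (2*x))^2) = (2*pi/2 + sin (4*(2*pi))/8) - (0/2 + sin (4*0)/8)"
    by (rule FTC02[where F = "\<lambda>x. x/2 + sin (4*x)/8"])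
       (auto intro!: continuous_intros derivative_eq_intros simp: c4(1) field_simps)
  then show ?thesis by (subst U2_integral) (auto intro!: continuous_intros)
qed

lemma int_sin2: "(\<integral>y. (sin (2*y))^2 \<partial>U2) = 1/2"
proof -
  have "(LBINT x : {0..2*pi}. (sin (2*x))^2) = (2*pi/2 - sin (4*(2*pi))/8) - (0/2 - sin (4*0)/8)"
    by (rule FTC02[where F = "\<lambda>x. x/2 - sin (4*x)/8"])
       (auto intro!: continuous_intros derivative_eq_intros simp: c4(2) field_simps)
  then show ?thesis by (subst U2_integral) (auto intro!: continuous_intros)
qed

lemma int_cossin: "(\<integral>y. cos (2*y) * sin (2*y) \<partial>U2) = 0"
proof -
  have "(LBINT x : {0..2*pi}. cos (2*x) * sin (2*x)) = (sin (2*(2*pi)))^2/4 - (sin (2*0))^2/4"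
    by (rule FTC02[where F = "\<lambda>x. (sin (2*x))^2/4"])
       (auto intro!: continuous_intros derivative_eq_intros simp: field_simps)
  then show ?thesis by (subst U2_integral) (auto intro!: continuous_intros)
qed

lemma pps: "product_prob_space (\<lambda>_. U2)"
  unfolding product_prob_space_def product_prob_space_axioms_def product_sigma_finite_def
  using U2_prob by (auto simp: prob_space_imp_sigma_finite)

lemma psf: "product_sigma_finite (\<lambda>_. U2)"
  using pps product_prob_space_def by blast

lemma PiU2_prob: "prob_space (PiM I (\<lambda>_. U2))"
proof -
  interpret product_prob_space "\<lambda>_. U2" I by (rule pps)
  show ?thesis by (rule P.prob_space_axioms)
qed

lemma comp_meas: assumes i: "i \<in> I" and h: "continuous_on UNIV (h :: real \<Rightarrow> real)"
  shows "(\<lambda>x. h (x i)) \<in> borel_measurable (PiM I (\<lambda>_. U2))"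
proof -
  have "(\<lambda>x. x i) \<in> measurable (PiM I (\<lambda>_. U2)) U2" by (rule measurable_component_singleton[OF i])
  have "(\<lambda>x. x i) \<in> borel_measurable (PiM I (\<lambda>_. U2))"
  proof -
    have "measurable (PiM I (\<lambda>_. U2)) U2 = borel_measurable (PiM I (\<lambda>_. U2))"
      by (rule measurable_cong_sets) auto
    then show ?thesis using \<open>(\<lambda>x. x i) \<in> measurable (PiM I (\<lambda>_. U2)) U2\<close> by simp
  qed
  then show ?thesis by (rule borel_measurable_continuous_on[OF h])
qed

lemma bounded_integrable: fixes f :: "('i \<Rightarrow> real) \<Rightarrow> real"
  assumes "f \<in> borel_measurable (PiM I (\<lambda>_. U2))" "\<And>x. \<bar>f x\<bar> \<le> B"
  shows "integrable (PiM I (\<lambda>_. U2)) f"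
proof -
  interpret P: prob_space "PiM I (\<lambda>_. U2)" by (rule PiU2_prob)
  show ?thesis by (rule P.integrable_const_bound[where B = B]) (use assms in auto)
qed

lemma indep_mult:
  fixes I :: "'i set" and g :: "('i \<Rightarrow> real) \<Rightarrow> real" and h :: "real \<Rightarrow> real"
  assumes fin: "finite I" and i: "i \<in> I"
    and g: "g \<in> borel_measurable (PiM I (\<lambda>_. U2))" and gb: "\<And>x. \<bar>g x\<bar> \<le> B"
    and gi: "\<And>x t. g (x(i:=t)) = g x"
    and h: "continuous_on UNIV h" and hb: "\<And>t. \<bar>h t\<bar> \<le> C"
  shows "(\<integral>x. g x * h (x i) \<partial>PiM I (\<lambda>_. U2)) = (\<integral>x. g x \<partial>PiM I (\<lambda>_. U2)) * (\<integral>t. h t \<partial>U2)"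
proof -
  interpret PS: product_sigma_finite "\<lambda>_. U2" by (rule psf)
  interpret U: prob_space U2 by (rule U2_prob)
  define J where "J = I - {i}"
  have IJ: "I = insert i J" and iJ: "i \<notin> J" and fJ: "finite J" using i fin by (auto simp: J_def)
  have ghm: "(\<lambda>x. g x * h (x i)) \<in> borel_measurable (PiM I (\<lambda>_. U2))"
    using g comp_meas[OF i h] by (rule borel_measurable_times)
  have int1: "integrable (PiM I (\<lambda>_. U2)) (\<lambda>x. g x * h (x i))"
  proof (rule bounded_integrable[OF ghm])
    fix x show "\<bar>g x * h (x i)\<bar> \<le> B * C"
      using gb[of x] hb[of "x i"] by (simp add: abs_mult mult_mono')
  qed
  have int2: "integrable (PiM I (\<lambda>_. U2)) g" by (rule bounded_integrable[OF g gb])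
  define G where "G x = g (x(i:=0))" for x
  have g0: "g (x(i:=y)) = G x" for x y unfolding G_def using gi[of "x(i:=0)" y] by simp
  have "(\<integral>x. g x * h (x i) \<partial>PiM I (\<lambda>_. U2)) =
      (\<integral>x. (\<integral>y. g (x(i:=y)) * h y \<partial>U2) \<partial>PiM J (\<lambda>_. U2))"
    using PS.product_integral_insert[OF fJ iJ, of "\<lambda>x. g x * h (x i)"] int1 unfolding IJ by simp
  also have "\<dots> = (\<integral>x. G x * (\<integral>y. h y \<partial>U2) \<partial>PiM J (\<lambda>_. U2))"
    by (simp add: g0)
  also have "\<dots> = (\<integral>x. G x \<partial>PiM J (\<lambda>_. U2)) * (\<integral>y. h y \<partial>U2)"
    by simp
  also have "(\<integral>x. G x \<partial>PiM J (\<lambda>_. U2)) = (\<integral>x. (\<integral>y. g (x(i:=y)) \<partial>U2) \<partial>PiM J (\<lambda>_. U2))"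
    by (simp add: g0 U.prob_space)
  also have "\<dots> = (\<integral>x. g x \<partial>PiM I (\<lambda>_. U2))"
    using PS.product_integral_insert[OF fJ iJ, of g] int2 unfolding IJ by simp
  finally show ?thesis .
qed

lemma int_gh: assumes i: "i \<in> I" and g: "g \<in> borel_measurable (PiM I (\<lambda>_. U2))" and gb: "\<And>x. \<bar>g x\<bar> \<le> Bg"
  and h: "continuous_on UNIV h" and hb: "\<And>t. \<bar>h t\<bar> \<le> (1::real)"
  shows "integrable (PiM I (\<lambda>_. U2)) (\<lambda>x. g x * h (x i))"
proof (rule bounded_integrable[where B = Bg])
  show "(\<lambda>x. g x * h (x i)) \<in> borel_measurable (PiM I (\<lambda>_. U2))"
    using g comp_meas[OF i h] by (rule borel_measurable_times)
  fix x
  have "\<bar>g x\<bar> * \<bar>h (x i)\<bar> \<le> \<bar>g x\<bar> * 1" by (rule mult_left_mono[OF hb]) simp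
  then show "\<bar>g x * h (x i)\<bar> \<le> Bg" using gb[of x] by (simp add: abs_mult)
qed

lemma step_int:
  fixes I :: "'i set" and a b :: "('i \<Rightarrow> real) \<Rightarrow> real"
  assumes fin: "finite I" and i: "i \<in> I"
    and a: "a \<in> borel_measurable (PiM I (\<lambda>_. U2))" and ab: "\<And>x. \<bar>a x\<bar> \<le> A"
    and b: "b \<in> borel_measurable (PiM I (\<lambda>_. U2))" and bb: "\<And>x. \<bar>b x\<bar> \<le> B"
    and ai: "\<And>x t. a (x(i:=t)) = a x" and bi: "\<And>x t. b (x(i:=t)) = b x"
  shows "(\<integral>x. (cos (2 * x i) * a x + sin (2 * x i) * b x)^2 \<partial>PiM I (\<lambda>_. U2)) =
    ((\<integral>x. (a x)^2 \<partial>PiM I (\<lambda>_. U2)) + (\<integral>x. (b x)^2 \<partial>PiM I (\<lambda>_. U2))) / 2"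
proof -
  let ?P = "PiM I (\<lambda>_. U2)"
  have A0: "0 \<le> A" using ab[of undefined] by simp
  have B0: "0 \<le> B" using bb[of undefined] by simp
  have a2: "(\<lambda>x. (a x)^2) \<in> borel_measurable ?P" using a by simp
  have b2: "(\<lambda>x. (b x)^2) \<in> borel_measurable ?P" using b by simp
  have ab2: "(\<lambda>x. 2 * a x * b x) \<in> borel_measurable ?P" using a b by simp
  have a2b: "\<bar>(a x)^2\<bar> \<le> A * A" for x using mult_mono[OF ab[of x] ab[of x] A0 abs_ge_zero] by (simp add: power2_eq_square abs_mult)
  have b2b: "\<bar>(b x)^2\<bar> \<le> B * B" for x using mult_mono[OF bb[of x] bb[of x] B0 abs_ge_zero] by (simp add: power2_eq_square abs_mult)
  have abb: "\<bar>2 * a x * b x\<bar> \<le> 2 * A * B" for x using ab[of x] bb[of x]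
    by (simp add: abs_mult mult_mono' A0 B0 mult.assoc)
  have hc: "continuous_on UNIV (\<lambda>t::real. (cos (2*t))^2)" "continuous_on UNIV (\<lambda>t::real. (sin (2*t))^2)"
     "continuous_on UNIV (\<lambda>t::real. cos (2*t) * sin (2*t))"
    by (auto intro!: continuous_intros)
  have hb: "\<bar>(cos (2*t))^2\<bar> \<le> 1" "\<bar>(sin (2*t))^2\<bar> \<le> 1" "\<bar>cos (2*t) * sin (2*t)\<bar> \<le> 1" for t :: real
    by (auto simp: abs_mult abs_square_le_1 intro: mult_le_one)
  have e1: "(\<integral>x. (a x)^2 * (cos (2 * x i))^2 \<partial>?P) = (\<integral>x. (a x)^2 \<partial>?P) * (1/2)"
    using indep_mult[OF fin i a2 a2b _ hc(1) hb(1)] ai int_cos2 by simp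
  have e2: "(\<integral>x. (b x)^2 * (sin (2 * x i))^2 \<partial>?P) = (\<integral>x. (b x)^2 \<partial>?P) * (1/2)"
    using indep_mult[OF fin i b2 b2b _ hc(2) hb(2)] bi int_sin2 by simp
  have e3: "(\<integral>x. (2 * a x * b x) * (cos (2 * x i) * sin (2 * x i)) \<partial>?P) = 0"
    using indep_mult[OF fin i ab2 abb _ hc(3) hb(3)] ai bi int_cossin by simp
  have i1: "integrable ?P (\<lambda>x. (a x)^2 * (cos (2 * x i))^2)"
    by (rule int_gh[OF i a2 a2b hc(1) hb(1)])
  have i2: "integrable ?P (\<lambda>x. (b x)^2 * (sin (2 * x i))^2)"
    by (rule int_gh[OF i b2 b2b hc(2) hb(2)])
  have i3: "integrable ?P (\<lambda>x. (2 * a x * b x) * (cos (2 * x i) * sin (2 * x i)))"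
    by (rule int_gh[OF i ab2 abb hc(3) hb(3)])
  have "(\<integral>x. (cos (2 * x i) * a x + sin (2 * x i) * b x)^2 \<partial>?P) =
     (\<integral>x. (a x)^2 * (cos (2 * x i))^2 + (2 * a x * b x) * (cos (2 * x i) * sin (2 * x i))
        + (b x)^2 * (sin (2 * x i))^2 \<partial>?P)"
    by (rule Bochner_Integration.integral_cong) (simp_all add: power2_eq_square algebra_simps)
  also have "\<dots> = (\<integral>x. (a x)^2 * (cos (2 * x i))^2 \<partial>?P) + (\<integral>x. (2 * a x * b x) * (cos (2 * x i) * sin (2 * x i)) \<partial>?P)
        + (\<integral>x. (b x)^2 * (sin (2 * x i))^2 \<partial>?P)"
    using i1 i2 i3 by simp
  also have "\<dots> = ((\<integral>x. (a x)^2 \<partial>?P) + (\<integral>x. (b x)^2 \<partial>?P)) / 2"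
    unfolding e1 e2 e3 by simp
  finally show ?thesis .
qed

type_synonym prm = "nat \<times> nat \<Rightarrow> real"

definition good :: "prm measure \<Rightarrow> nat \<Rightarrow> (prm \<Rightarrow> complex mat) \<Rightarrow> bool" where
  "good P d A \<longleftrightarrow> (\<forall>x. A x \<in> carrier_mat d d) \<and> (\<forall>i<d. \<forall>j<d. (\<lambda>x. A x $$ (i,j)) \<in> borel_measurable P) \<and>
     (\<exists>B. \<forall>x i j. i < d \<longrightarrow> j < d \<longrightarrow> cmod (A x $$ (i,j)) \<le> B)"

lemma good_const: assumes C: "C \<in> carrier_mat d d" shows "good P d (\<lambda>_. C)"
proof -
  have "cmod (C $$ (i,j)) \<le> (\<Sum>i'<d. \<Sum>j'<d. cmod (C $$ (i',j')))" if "i < d" "j < d" for i j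
  proof -
    have "cmod (C $$ (i,j)) \<le> (\<Sum>j'<d. cmod (C $$ (i,j')))"
      by (rule member_le_sum[where f = "\<lambda>j'. cmod (C $$ (i,j'))"]) (use that in auto)
    also have "\<dots> \<le> (\<Sum>i'<d. \<Sum>j'<d. cmod (C $$ (i',j')))"
      by (rule member_le_sum[where f = "\<lambda>i'. \<Sum>j'<d. cmod (C $$ (i',j'))"]) (use that in \<open>auto intro: sum_nonneg\<close>)
    finally show ?thesis .
  qed
  then show ?thesis unfolding good_def using C by auto
qed

lemma good_mult: assumes A: "good P d A" and B: "good P d B" shows "good P d (\<lambda>x. A x * B x)"
proof -
  obtain BA where BA: "\<And>x i j. i < d \<Longrightarrow> j < d \<Longrightarrow> cmod (A x $$ (i,j)) \<le> BA" using A unfolding good_def by blast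
  obtain BB where BB: "\<And>x i j. i < d \<Longrightarrow> j < d \<Longrightarrow> cmod (B x $$ (i,j)) \<le> BB" using B unfolding good_def by blast
  have Ac: "\<And>x. A x \<in> carrier_mat d d" and Bc: "\<And>x. B x \<in> carrier_mat d d" using A B unfolding good_def by auto
  have ent: "(A x * B x) $$ (i,j) = (\<Sum>k<d. A x $$ (i,k) * B x $$ (k,j))" if "i < d" "j < d" for x i j
    using that Ac[of x] Bc[of x] by (auto simp: scalar_prod_def lessThan_atLeast0 intro!: sum.cong)
  have meas: "(\<lambda>x. (A x * B x) $$ (i,j)) \<in> borel_measurable P" if "i < d" "j < d" for i j
  proof -
    have "(\<lambda>x. \<Sum>k<d. A x $$ (i,k) * B x $$ (k,j)) \<in> borel_measurable P"
      using A B that unfolding good_def by (intro borel_measurable_sum borel_measurable_times) auto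
    then show ?thesis using ent[OF that] by simp
  qed
  have bnd: "cmod ((A x * B x) $$ (i,j)) \<le> d * (BA * BB)" if "i < d" "j < d" for x i j
  proof -
    have "cmod ((A x * B x) $$ (i,j)) \<le> (\<Sum>k<d. cmod (A x $$ (i,k)) * cmod (B x $$ (k,j)))"
      unfolding ent[OF that] by (rule order_trans[OF norm_sum]) (simp add: norm_mult)
    also have "\<dots> \<le> (\<Sum>k<d. BA * BB)"
      by (rule sum_mono, rule mult_mono) (use that BA BB in \<open>auto intro: order_trans[OF norm_ge_zero]\<close>)
    finally show ?thesis by simp
  qed
  have "\<forall>x. A x * B x \<in> carrier_mat d d" using Ac Bc by simp
  then show ?thesis unfolding good_def using meas bnd by blast
qed

lemma good_adj: assumes A: "good P d A" shows "good P d (\<lambda>x. mat_adjoint (A x))"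
proof -
  have Ac: "\<And>x. A x \<in> carrier_mat d d" using A unfolding good_def by auto
  obtain BA where BA: "\<And>x i j. i < d \<Longrightarrow> j < d \<Longrightarrow> cmod (A x $$ (i,j)) \<le> BA" using A unfolding good_def by blast
  have ent: "mat_adjoint (A x) $$ (i,j) = cnj (A x $$ (j,i))" if "i < d" "j < d" for x i j
    using that Ac[of x] by simp
  have meas: "(\<lambda>x. mat_adjoint (A x) $$ (i,j)) \<in> borel_measurable P" if "i < d" "j < d" for i j
  proof -
    have "(\<lambda>x. cnj (A x $$ (j,i))) \<in> borel_measurable P"
      using A that unfolding good_def
      by (intro borel_measurable_continuous_on[where f = cnj]) (auto intro: continuous_intros)
    then show ?thesis using ent[OF that] by simp
  qed
  have bnd: "cmod (mat_adjoint (A x) $$ (i,j)) \<le> BA" if "i < d" "j < d" for x i j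
    using ent[OF that] BA that by simp
  have "\<forall>x. mat_adjoint (A x) \<in> carrier_mat d d" using Ac by simp
  then show ?thesis unfolding good_def using meas bnd by blast
qed

lemma good_onq: assumes U: "good P 2 U" shows "good P (2^n) (\<lambda>x. on_qubit n q (U x))"
proof -
  obtain BU where BU: "\<And>x i j. i < 2 \<Longrightarrow> j < 2 \<Longrightarrow> cmod (U x $$ (i,j)) \<le> BU" using U unfolding good_def by blast
  have B0: "0 \<le> BU" using BU[of 0 0 undefined] by (auto intro: order_trans[OF norm_ge_zero])
  have meas: "(\<lambda>x. on_qubit n q (U x) $$ (i,j)) \<in> borel_measurable P" if "i < 2^n" "j < 2^n" for i j
    using U that qbit_lt2[of n q i] qbit_lt2[of n q j] unfolding good_def
    by (cases "agree n q i j") (auto simp: on_qubit_index)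
  have bnd: "cmod (on_qubit n q (U x) $$ (i,j)) \<le> BU" if "i < 2^n" "j < 2^n" for x i j
    using that BU B0 by (auto simp: on_qubit_index qbit_lt2)
  have c: "\<forall>x. on_qubit n q (U x) \<in> carrier_mat (2^n) (2^n)" by simp
  show ?thesis unfolding good_def
  proof (intro conjI)
    show "\<exists>B. \<forall>x i j. i < 2^n \<longrightarrow> j < 2^n \<longrightarrow> cmod (on_qubit n q (U x) $$ (i,j)) \<le> B"
      using bnd by blast
  qed (use c meas in auto)
qed

lemma comp_meas': assumes i: "i \<in> I" and h: "continuous_on UNIV (h :: real \<Rightarrow> 'b::topological_space)"
  shows "(\<lambda>x. h (x i)) \<in> borel_measurable (PiM I (\<lambda>_. U2))"
proof -
  have m: "(\<lambda>x. x i) \<in> measurable (PiM I (\<lambda>_. U2)) U2" by (rule measurable_component_singleton[OF i])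
  have "measurable (PiM I (\<lambda>_. U2)) U2 = borel_measurable (PiM I (\<lambda>_. U2))"
    by (rule measurable_cong_sets) auto
  then have "(\<lambda>x. x i) \<in> borel_measurable (PiM I (\<lambda>_. U2))" using m by simp
  then show ?thesis by (rule borel_measurable_continuous_on[OF h])
qed

lemma good_rot: assumes p: "p \<in> I" shows "good (PiM I (\<lambda>_. U2)) 2 (\<lambda>x. rot (x p))"
proof -
  have c: "continuous_on UNIV (\<lambda>t. rot t $$ (i,j))" if "i < 2" "j < 2" for i j
    using that by (auto simp: rot_m22 m22_def dest!: less_2_cases intro!: continuous_intros)
  have b: "cmod (rot t $$ (i,j)) \<le> 1" if "i < 2" "j < 2" for t i j
    using that by (auto simp: rot_m22 m22_def dest!: less_2_cases)
  show ?thesis unfolding good_def using comp_meas'[OF p c] b by simp blast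
qed

lemma good_prod_list: assumes "\<forall>j\<in>set js. good P d (F j)"
  shows "good P d (\<lambda>x. mat_prod_list d (map (\<lambda>j. F j x) js))"
  using assms
proof (induction js)
  case Nil then show ?case by (simp add: mat_prod_list_def good_const)
next
  case (Cons j js) then show ?case by (simp add: mat_prod_list_Cons good_mult)
qed

lemma good_ev: assumes A: "good P d A"
  shows "(\<lambda>x. Re (mat_trace (A x))) \<in> borel_measurable P" "\<exists>B. \<forall>x. \<bar>Re (mat_trace (A x))\<bar> \<le> B"
proof -
  have Ac: "\<And>x. A x \<in> carrier_mat d d" using A unfolding good_def by auto
  obtain BA where BA: "\<And>x i j. i < d \<Longrightarrow> j < d \<Longrightarrow> cmod (A x $$ (i,j)) \<le> BA" using A unfolding good_def by blast
  have tr: "mat_trace (A x) = (\<Sum>i<d. A x $$ (i,i))" for x using Ac[of x] by (simp add: mat_trace_def)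
  have "(\<lambda>x. \<Sum>i<d. A x $$ (i,i)) \<in> borel_measurable P"
    using A unfolding good_def by (intro borel_measurable_sum) auto
  then show "(\<lambda>x. Re (mat_trace (A x))) \<in> borel_measurable P" unfolding tr by measurable
  have "\<bar>Re (mat_trace (A x))\<bar> \<le> d * BA" for x
  proof -
    have "\<bar>Re (mat_trace (A x))\<bar> \<le> cmod (mat_trace (A x))" by (rule abs_Re_le_cmod)
    also have "\<dots> \<le> (\<Sum>i<d. cmod (A x $$ (i,i)))" unfolding tr by (rule norm_sum)
    also have "\<dots> \<le> (\<Sum>i<d. BA)" by (rule sum_mono) (use BA in auto)
    finally show ?thesis by simp
  qed
  then show "\<exists>B. \<forall>x. \<bar>Re (mat_trace (A x))\<bar> \<le> B" by blast
qed

abbreviation PP :: "nat \<Rightarrow> nat \<Rightarrow> prm measure" where "PP n m \<equiv> PiM (TT_params n m) (\<lambda>_. U2)"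

lemma PP_eq: "TT_param_measure n m = PP n m" by (simp add: TT_param_measure_def)

lemma fin_params: "finite (TT_params n m)"
proof (rule finite_subset)
  show "TT_params n m \<subseteq> {1..m+1} \<times> {1..n}"
    unfolding TT_params_def by (auto intro: order_trans[OF _ div_le_dividend])
qed auto

lemma good_V: assumes "1 \<le> l" "l \<le> m + 1" shows "good (PP n m) (2^n) (V_layer n l)"
proof -
  have "good (PP n m) (2^n) (\<lambda>\<theta>. mat_prod_list (2 ^ n)
     (map (\<lambda>j. on_qubit n ((j - 1) * 2 ^ (l - 1) + 1) (rot (\<theta> (l, j)))) [1..<n div 2 ^ (l - 1) + 1]))"
    by (rule good_prod_list) (use assms in \<open>auto intro!: good_onq good_rot simp: TT_params_def\<close>)
  then show ?thesis unfolding V_layer_def[abs_def] .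
qed

lemma good_TT: "k \<le> m + 1 \<Longrightarrow> good (PP n m) (2^n) (TT_partial n k)"
proof (induction k rule: less_induct)
  case (less k)
  show ?case
  proof (cases k)
    case 0 then show ?thesis by (simp add: good_const)
  next
    case (Suc k')
    show ?thesis
    proof (cases k')
      case 0 then show ?thesis using Suc less.prems good_V[of 1 m n] by (simp add: One_nat_def)
    next
      case (Suc k'')
      have "good (PP n m) (2^n) (\<lambda>\<theta>. V_layer n (k'' + 2) \<theta> * CX_layer n (k'' + 1) * TT_partial n (Suc k'') \<theta>)"
        using less.prems less.IH[of "Suc k''"] \<open>k = Suc k'\<close> Suc
        by (intro good_mult good_V good_const) auto
      then show ?thesis using \<open>k = Suc k'\<close> Suc by simp
    qed
  qed
qed

lemma good_sig: assumes "k \<le> m + 1" "\<rho> \<in> carrier_mat (2^n) (2^n)" shows "good (PP n m) (2^n) (sig n \<rho> k)"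
  unfolding sig_def[abs_def] using assms by (intro good_mult good_adj good_TT good_const)

lemma good_tau: assumes "k \<le> m" "\<rho> \<in> carrier_mat (2^n) (2^n)" shows "good (PP n m) (2^n) (tau n \<rho> k)"
proof (cases "k = 0")
  case True then show ?thesis using assms by (simp add: tau_def[abs_def] good_const)
next
  case False then show ?thesis using assms
    unfolding tau_def[abs_def] by (simp, intro good_mult good_adj good_sig good_const) auto
qed

lemma good_ev_fun: assumes "good P (2^n) A" "Ob \<in> carrier_mat (2^n) (2^n)"
  shows "(\<lambda>x. ev Ob (A x)) \<in> borel_measurable P" "\<exists>B. \<forall>x. \<bar>ev Ob (A x)\<bar> \<le> B"
  unfolding ev_def using good_ev[OF good_mult[OF good_const[OF assms(2)] assms(1)]] by auto

lemma V_agree: "(\<And>j. \<theta>' (l,j) = \<theta> (l,j)) \<Longrightarrow> V_layer n l \<theta>' = V_layer n l \<theta>"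
  unfolding V_layer_def by (rule arg_cong[where f = "mat_prod_list (2^n)"], rule map_cong) auto

lemma TT_agree: "(\<And>l j. l \<le> k \<Longrightarrow> \<theta>' (l,j) = \<theta> (l,j)) \<Longrightarrow> TT_partial n k \<theta>' = TT_partial n k \<theta>"
proof (induction n k \<theta> rule: TT_partial.induct)
  case (1 n \<theta>) then show ?case by simp
next
  case (2 n \<theta>)
  have "V_layer n 1 \<theta>' = V_layer n 1 \<theta>" by (rule V_agree) (use 2 in simp)
  then show ?case by simp
next
  case (3 n k \<theta>)
  have "V_layer n (k + 2) \<theta>' = V_layer n (k + 2) \<theta>" by (rule V_agree) (use 3 in simp)
  moreover have "TT_partial n (Suc k) \<theta>' = TT_partial n (Suc k) \<theta>" by (rule 3(1)) (use 3 in simp)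
  ultimately show ?case by simp
qed

lemma TT_indep: "k < fst p \<Longrightarrow> TT_partial n k (\<theta>(p:=t)) = TT_partial n k \<theta>"
  by (rule TT_agree) auto

lemma sig_indep: "k < fst p \<Longrightarrow> sig n \<rho> k (\<theta>(p:=t)) = sig n \<rho> k \<theta>"
  by (simp add: sig_def TT_indep)

lemma tau_indep: "k < fst p \<Longrightarrow> tau n \<rho> k (\<theta>(p:=t)) = tau n \<rho> k \<theta>"
  by (simp add: tau_def sig_indep)

lemma param_in: fixes m n k :: nat assumes "k \<le> m" "n = 2^m" shows "(Suc k, 1) \<in> TT_params n m"
proof -
  have "(2::nat)^k \<le> 2^m" using assms by (intro power_increasing) auto
  then have "0 < n div 2^k" using assms(2) by (simp add: div_greater_zero_iff)
  then show ?thesis using assms unfolding TT_params_def by auto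
qed

lemma step_layer:
  fixes m n k :: nat and Ob :: "complex mat"
  assumes k: "k \<le> m" and n: "n = 2^m" and r: "\<rho> \<in> carrier_mat (2^n) (2^n)"
    and F: "\<And>\<theta>. F \<theta> = cos (2 * \<theta> (Suc k, 1)) * ev Oa (tau n \<rho> k \<theta>) + sin (2 * \<theta> (Suc k, 1)) * (s * ev Ob (tau n \<rho> k \<theta>))"
    and Oa: "Oa \<in> carrier_mat (2^n) (2^n)" and Ob: "Ob \<in> carrier_mat (2^n) (2^n)"
  shows "(\<integral>\<theta>. (F \<theta>)^2 \<partial>PP n m) = ((\<integral>\<theta>. (ev Oa (tau n \<rho> k \<theta>))^2 \<partial>PP n m) + (\<integral>\<theta>. (s * ev Ob (tau n \<rho> k \<theta>))^2 \<partial>PP n m)) / 2"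
proof -
  have g: "good (PP n m) (2^n) (tau n \<rho> k)" by (rule good_tau[OF k r])
  obtain A where A: "\<And>x. \<bar>ev Oa (tau n \<rho> k x)\<bar> \<le> A" using good_ev_fun(2)[OF g Oa] by blast
  obtain B where B: "\<And>x. \<bar>ev Ob (tau n \<rho> k x)\<bar> \<le> B" using good_ev_fun(2)[OF g Ob] by blast
  have Bs: "\<bar>s * ev Ob (tau n \<rho> k x)\<bar> \<le> \<bar>s\<bar> * B" for x
    using B[of x] by (simp add: abs_mult mult_left_mono)
  have mA: "(\<lambda>x. ev Oa (tau n \<rho> k x)) \<in> borel_measurable (PP n m)" by (rule good_ev_fun(1)[OF g Oa])
  have mB: "(\<lambda>x. s * ev Ob (tau n \<rho> k x)) \<in> borel_measurable (PP n m)"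
    using good_ev_fun(1)[OF g Ob] by simp
  have ind: "tau n \<rho> k (x((Suc k, 1) := t)) = tau n \<rho> k x" for x t by (rule tau_indep) simp
  have "(\<integral>\<theta>. (F \<theta>)^2 \<partial>PP n m) = (\<integral>\<theta>. (cos (2 * \<theta> (Suc k, 1)) * ev Oa (tau n \<rho> k \<theta>) + sin (2 * \<theta> (Suc k, 1)) * (s * ev Ob (tau n \<rho> k \<theta>)))^2 \<partial>PP n m)"
    by (simp add: F)
  also have "\<dots> = ((\<integral>\<theta>. (ev Oa (tau n \<rho> k \<theta>))^2 \<partial>PP n m) + (\<integral>\<theta>. (s * ev Ob (tau n \<rho> k \<theta>))^2 \<partial>PP n m)) / 2"
    by (rule step_int[OF fin_params param_in[OF k n] mA A mB Bs]) (simp_all add: ind)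
  finally show ?thesis .
qed

theorem lemma7:
  fixes m n :: nat and \<rho> :: "complex mat"
  assumes "m \<ge> 1" and "n = 2 ^ m" and "density_matrix n \<rho>"
  shows "(\<integral>\<theta>. (f_TT n m \<rho> \<theta> - 1/2)\<^sup>2 \<partial>TT_param_measure n m) \<ge>
    ((Re (mat_trace (on_qubit n 1 (pauli 1) * \<rho>)))\<^sup>2 + (Re (mat_trace (on_qubit n 1 (pauli 3) * \<rho>)))\<^sup>2)
      / (8 * real n)"
proof -
  have r: "\<rho> \<in> carrier_mat (2^n) (2^n)" using assms(3) unfolding density_matrix_def by simp
  note n = assms(2)
  define X1 where "X1 = on_qubit n 1 (pauli 1)"
  define Z1 where "Z1 = on_qubit n 1 (pauli 3)"
  have X1c: "X1 \<in> carrier_mat (2^n) (2^n)" and Z1c: "Z1 \<in> carrier_mat (2^n) (2^n)"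
    by (simp_all add: X1_def Z1_def)
  interpret PS: prob_space "PP n m" by (rule PiU2_prob)
  define c where "c = (ev X1 \<rho>)^2 + (ev Z1 \<rho>)^2"
  have tau0: "tau n \<rho> 0 \<theta> = \<rho>" for \<theta> by (simp add: tau_def)
  have xs_step: "(\<integral>\<theta>. (ev X1 (sig n \<rho> (Suc k) \<theta>))^2 \<partial>PP n m) =
      ((\<integral>\<theta>. (ev X1 (tau n \<rho> k \<theta>))^2 \<partial>PP n m) + (\<integral>\<theta>. (1 * ev Z1 (tau n \<rho> k \<theta>))^2 \<partial>PP n m)) / 2"
    if k: "k \<le> m" for k
    by (rule step_layer[OF k n r _ X1c Z1c]) (simp add: X1_def Z1_def X_step[OF k n r])
  have main: "c / 2^k \<le> (\<integral>\<theta>. (ev X1 (sig n \<rho> k \<theta>))^2 \<partial>PP n m)" if "1 \<le> k" "k \<le> m" for k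
    using that
  proof (induction k)
    case 0 then show ?case by simp
  next
    case (Suc k)
    show ?case
    proof (cases "k = 0")
      case True
      have "(\<integral>\<theta>. (ev X1 (sig n \<rho> (Suc k) \<theta>))^2 \<partial>PP n m) = c / 2"
        using xs_step[of 0] True by (simp add: tau0 PS.prob_space c_def)
      then show ?thesis using True by simp
    next
      case False
      have k: "1 \<le> k" "k \<le> m" using False Suc.prems by auto
      have IH: "c / 2^k \<le> (\<integral>\<theta>. (ev X1 (sig n \<rho> k \<theta>))^2 \<partial>PP n m)" using Suc.IH k by simp
      have eq: "(\<integral>\<theta>. (ev X1 (tau n \<rho> k \<theta>))^2 \<partial>PP n m) = (\<integral>\<theta>. (ev X1 (sig n \<rho> k \<theta>))^2 \<partial>PP n m)"
        using X_CX[OF k n r] by (simp add: X1_def)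
      have nn: "0 \<le> (\<integral>\<theta>. (1 * ev Z1 (tau n \<rho> k \<theta>))^2 \<partial>PP n m)"
        by (rule Bochner_Integration.integral_nonneg) simp
      have "c / 2^(Suc k) = (c / 2^k) / 2" by simp
      also have "\<dots> \<le> (\<integral>\<theta>. (ev X1 (sig n \<rho> k \<theta>))^2 \<partial>PP n m) / 2" using IH by simp
      also have "\<dots> \<le> (\<integral>\<theta>. (ev X1 (sig n \<rho> (Suc k) \<theta>))^2 \<partial>PP n m)"
        unfolding xs_step[OF k(2)] using k eq nn by simp
      finally show ?thesis .
    qed
  qed
  have m1: "1 \<le> m" "m \<le> m" using assms(1) by auto
  have zs: "(\<integral>\<theta>. (ev Z1 (sig n \<rho> (Suc m) \<theta>))^2 \<partial>PP n m) =
      ((\<integral>\<theta>. (ev Z1 (tau n \<rho> m \<theta>))^2 \<partial>PP n m) + (\<integral>\<theta>. (-1 * ev X1 (tau n \<rho> m \<theta>))^2 \<partial>PP n m)) / 2"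
    by (rule step_layer[OF m1(2) n r _ Z1c X1c]) (simp add: X1_def Z1_def Z_step[OF m1(2) n r])
  have eqm: "(\<integral>\<theta>. (-1 * ev X1 (tau n \<rho> m \<theta>))^2 \<partial>PP n m) = (\<integral>\<theta>. (ev X1 (sig n \<rho> m \<theta>))^2 \<partial>PP n m)"
    using X_CX[OF m1 n r] by (simp add: X1_def)
  have nnz: "0 \<le> (\<integral>\<theta>. (ev Z1 (tau n \<rho> m \<theta>))^2 \<partial>PP n m)"
    by (rule Bochner_Integration.integral_nonneg) simp
  have f: "(\<integral>\<theta>. (f_TT n m \<rho> \<theta> - 1/2)\<^sup>2 \<partial>TT_param_measure n m) =
      (\<integral>\<theta>. (ev Z1 (sig n \<rho> (Suc m) \<theta>))^2 \<partial>PP n m) / 4"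
    unfolding PP_eq f_TT_ev[OF r] Z1_def by (simp add: power_mult_distrib power_divide)
  have "((Re (mat_trace (on_qubit n 1 (pauli 1) * \<rho>)))\<^sup>2 + (Re (mat_trace (on_qubit n 1 (pauli 3) * \<rho>)))\<^sup>2)
      / (8 * real n) = (c / 2^m) / 8"
    by (simp add: c_def ev_def X1_def Z1_def n)
  also have "\<dots> \<le> (\<integral>\<theta>. (ev X1 (sig n \<rho> m \<theta>))^2 \<partial>PP n m) / 8" using main[OF m1] by simp
  also have "\<dots> \<le> (\<integral>\<theta>. (f_TT n m \<rho> \<theta> - 1/2)\<^sup>2 \<partial>TT_param_measure n m)"
    unfolding f zs eqm using nnz by simp
  finally show ?thesis .
qed

end
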